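(* The exponential generating function $T_1(z)=\sum_n T_{1,n}\frac{z^n}{n!}$ of vertex-labeled tree-child networks with exactly one reticulation vertex is \[ T_1(z)=\frac{z^3\left(1-\sqrt{1-2z^2}\,\right)}{(1-2z^2)^{3/2}}=z\frac{\tilde{a}_1(z^2)-\tilde{b}_1(z^2)\sqrt{1-2z^2}}{(1-2z^2)^{3/2}}, \] where $\tilde{a}_1(z)=\tilde{b}_1(z)=z$.
   Context: A phylogenetic network is a connected rooted directed acyclic graph whose vertices are: a root with in-degree 0 and out-degree 2 (unless the network is a single vertex); tree vertices with in-degree 1 and out-degree 2; reticulation vertices with in-degree 2 and out-degree 1; leaves with in-degree 1 and out-degree 0. A tree-child network is a phylogenetic network in which every non-leaf vertex has at least one child that is not a reticulation vertex (in particular no multiple edges). A vertex-labeled network with $n$ vertices has its vertices labeled by distinct labels $1,\dots,n$; $T_{1,n}$ is the number of such tree-child networks with $n$ vertices and one reticulation vertex. *)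

theory Defs
  imports Complex_Main
begin

(* A vertex-labeled network is a simple directed graph: vertex set V, edge relation E \<subseteq> V \<times> V.
   Tree-child networks have no multiple edges, so a relation suffices. *)

definition indeg :: "('a \<times> 'a) set \<Rightarrow> 'a \<Rightarrow> nat" where
  "indeg E v = card {u. (u, v) \<in> E}"

definition outdeg :: "('a \<times> 'a) set \<Rightarrow> 'a \<Rightarrow> nat" where
  "outdeg E v = card {w. (v, w) \<in> E}"

definition is_reticulation :: "('a \<times> 'a) set \<Rightarrow> 'a \<Rightarrow> bool" where
  "is_reticulation E v \<longleftrightarrow> indeg E v = 2 \<and> outdeg E v = 1"

definition phylo_network :: "'a set \<Rightarrow> ('a \<times> 'a) set \<Rightarrow> bool" where
  "phylo_network V E \<longleftrightarrow>
     finite V \<and> E \<subseteq> V \<times> V \<and> acyclic E \<and>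
     (\<exists>r\<in>V. (\<forall>v\<in>V. (r, v) \<in> E\<^sup>*) \<and>
        indeg E r = 0 \<and> (outdeg E r = 2 \<or> V = {r}) \<and>
        (\<forall>v\<in>V - {r}.
            (indeg E v = 1 \<and> outdeg E v = 2) \<or>
            (indeg E v = 2 \<and> outdeg E v = 1) \<or>
            (indeg E v = 1 \<and> outdeg E v = 0)))"

definition tree_child_network :: "'a set \<Rightarrow> ('a \<times> 'a) set \<Rightarrow> bool" where
  "tree_child_network V E \<longleftrightarrow> phylo_network V E \<and>
     (\<forall>v\<in>V. outdeg E v \<noteq> 0 \<longrightarrow> (\<exists>w. (v, w) \<in> E \<and> \<not> is_reticulation E w))"

definition T1 :: "nat \<Rightarrow> nat" where
  "T1 n = card {E. E \<subseteq> {1..n} \<times> {1..n} \<and> tree_child_network {1..n} E \<and>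
                   card {v \<in> {1..n}. is_reticulation E v} = 1}"

definition a1_tilde :: "real \<Rightarrow> real" where "a1_tilde z = z"
definition b1_tilde :: "real \<Rightarrow> real" where "b1_tilde z = z"

end

theory Submission
  imports Defs "HOL-Analysis.Generalised_Binomial_Theorem"
begin

definition tree :: "'a set \<Rightarrow> ('a \<times> 'a) set \<Rightarrow> 'a \<Rightarrow> bool" where
  "tree S E \<rho> \<longleftrightarrow> finite S \<and> E \<subseteq> S \<times> S \<and> acyclic E \<and> \<rho> \<in> S \<and>
     (\<forall>v\<in>S. (\<rho>, v) \<in> E\<^sup>*) \<and> (\<forall>v\<in>S - {\<rho>}. indeg E v = 1)"

definition RT :: "'a set \<Rightarrow> 'a \<Rightarrow> ('a \<Rightarrow> nat) \<Rightarrow> ('a \<times> 'a) set set" where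
  "RT S \<rho> d = {E. tree S E \<rho> \<and> (\<forall>v\<in>S. outdeg E v = d v)}"

lemma card_rel_out:
  assumes "finite S" "E \<subseteq> S \<times> S"
  shows "card E = (\<Sum>v\<in>S. outdeg E v)"
proof -
  have "E = Sigma S (\<lambda>v. {w. (v,w) \<in> E})" using assms(2) by auto
  moreover have "card (Sigma S (\<lambda>v. {w. (v,w) \<in> E})) = (\<Sum>v\<in>S. card {w. (v,w) \<in> E})"
    apply (rule card_SigmaI) using assms by (auto intro: finite_subset[of _ S])
  ultimately show ?thesis by (simp add: outdeg_def)
qed

lemma card_rel_in:
  assumes "finite S" "E \<subseteq> S \<times> S"
  shows "card E = (\<Sum>v\<in>S. indeg E v)"
proof -
  have "card (E\<inverse>) = (\<Sum>v\<in>S. outdeg (E\<inverse>) v)" using assms by (intro card_rel_out) auto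
  moreover have "card (E\<inverse>) = card E" by simp
  moreover have "outdeg (E\<inverse>) v = indeg E v" for v by (simp add: outdeg_def indeg_def)
  ultimately show ?thesis by simp
qed

lemma tree_root_indeg:
  assumes "tree S E \<rho>" shows "indeg E \<rho> = 0"
proof -
  have "{u. (u,\<rho>) \<in> E} = {}"
  proof (rule ccontr)
    assume "{u. (u,\<rho>) \<in> E} \<noteq> {}"
    then obtain u where u: "(u,\<rho>) \<in> E" by auto
    then have "u \<in> S" using assms unfolding tree_def by auto
    then have "(\<rho>,u) \<in> E\<^sup>*" using assms unfolding tree_def by auto
    with u have "(u,u) \<in> E\<^sup>+" by (meson rtrancl_into_trancl2)
    then show False using assms unfolding tree_def acyclic_def by auto
  qed
  then show ?thesis by (simp add: indeg_def)
qed

lemma tree_finite_E: "tree S E \<rho> \<Longrightarrow> finite E"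
  unfolding tree_def by (meson finite_SigmaI finite_subset)

lemma tree_card_E:
  assumes "tree S E \<rho>" shows "card E = card S - 1"
proof -
  have fs: "finite S" and sub: "E \<subseteq> S \<times> S" and r: "\<rho> \<in> S" using assms unfolding tree_def by auto
  have "card E = (\<Sum>v\<in>S. indeg E v)" using card_rel_in[OF fs sub] .
  also have "\<dots> = indeg E \<rho> + (\<Sum>v\<in>S - {\<rho>}. indeg E v)" using fs r by (simp add: sum.remove)
  also have "\<dots> = (\<Sum>v\<in>S - {\<rho>}. 1)"
  proof -
    have "(\<Sum>v\<in>S - {\<rho>}. indeg E v) = (\<Sum>v\<in>S - {\<rho>}. 1)"
      using assms unfolding tree_def by (intro sum.cong) auto
    then show ?thesis using tree_root_indeg[OF assms] by simp
  qed
  also have "\<dots> = card S - 1" using fs r by simp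
  finally show ?thesis .
qed

lemma tree_sum_outdeg:
  assumes "tree S E \<rho>" shows "(\<Sum>v\<in>S. outdeg E v) = card S - 1"
  using tree_card_E[OF assms] card_rel_out[of S E] assms unfolding tree_def by simp

lemma tree_root_unique:
  assumes "tree S E \<rho>" "tree S E \<rho>'" shows "\<rho> = \<rho>'"
  using tree_root_indeg[OF assms(2)] assms(1) assms(2) unfolding tree_def by force

lemma tree_root_outdeg:
  assumes "tree S E \<rho>" "card S \<ge> 2" shows "outdeg E \<rho> \<ge> 1"
proof -
  have fs: "finite S" and r: "\<rho> \<in> S" using assms unfolding tree_def by auto
  have "\<not> S \<subseteq> {\<rho>}"
  proof
    assume "S \<subseteq> {\<rho>}"
    then have "card S \<le> card {\<rho>}" by (intro card_mono) auto
    then show False using assms(2) by simp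
  qed
  then obtain v where v: "v \<in> S" "v \<noteq> \<rho>" by auto
  then have "(\<rho>, v) \<in> E\<^sup>+" using assms unfolding tree_def by (auto simp: rtrancl_eq_or_trancl)
  then obtain w where w: "(\<rho>, w) \<in> E" by (meson tranclD)
  have sub: "E \<subseteq> S \<times> S" using assms unfolding tree_def by blast
  have "{w. (\<rho>, w) \<in> E} \<subseteq> S" using sub by blast
  then have "finite {w. (\<rho>, w) \<in> E}" using fs by (rule finite_subset)
  then show ?thesis using w unfolding outdeg_def
    by (auto simp: Suc_le_eq card_gt_0_iff)
qed

lemma finite_succ: "finite S \<Longrightarrow> E \<subseteq> S \<times> S \<Longrightarrow> finite {w. (v, w) \<in> E}"
  by (rule finite_subset[of _ S]) auto

lemma finite_pred: "finite S \<Longrightarrow> E \<subseteq> S \<times> S \<Longrightarrow> finite {u. (u, v) \<in> E}"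
  by (rule finite_subset[of _ S]) auto

lemma leaf_remove:
  assumes T: "tree S E \<rho>" and l: "lf \<in> S" "lf \<noteq> \<rho>" and od: "outdeg E lf = 0"
  obtains j where "(j, lf) \<in> E" "j \<in> S - {lf}" "tree (S - {lf}) (E - {(j, lf)}) \<rho>"
    "E = insert (j, lf) (E - {(j, lf)})"
    "\<And>v. outdeg (E - {(j, lf)}) v = (if v = j then outdeg E v - 1 else outdeg E v)"
    "outdeg E j \<ge> 1"
proof -
  have fs: "finite S" and sub: "E \<subseteq> S \<times> S" and ac: "acyclic E" and r: "\<rho> \<in> S"
    and reach: "\<forall>v\<in>S. (\<rho>, v) \<in> E\<^sup>*" and ind: "\<forall>v\<in>S - {\<rho>}. indeg E v = 1"
    using T unfolding tree_def by auto
  have "card {u. (u, lf) \<in> E} = 1" using ind l unfolding indeg_def by auto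
  then obtain j where pj: "{u. (u, lf) \<in> E} = {j}" by (meson card_1_singletonE)
  have sl: "{w. (lf, w) \<in> E} = {}" using od finite_succ[OF fs sub, of lf] unfolding outdeg_def by simp
  have jl: "(j, lf) \<in> E" using pj by auto
  have jS: "j \<in> S" using jl sub by auto
  have jne: "j \<noteq> lf" using jl sl by auto
  define E' where "E' = E - {(j, lf)}"
  have sub': "E' \<subseteq> (S - {lf}) \<times> (S - {lf})"
  proof
    fix x assume "x \<in> E'"
    then obtain u v where x: "x = (u, v)" "(u, v) \<in> E" "(u, v) \<noteq> (j, lf)" unfolding E'_def by (cases x) auto
    have "u \<noteq> lf" using x sl by auto
    moreover have "v \<noteq> lf" using x pj by auto
    ultimately show "x \<in> (S - {lf}) \<times> (S - {lf})" using x sub by auto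
  qed
  have reach': "(\<rho>, v) \<in> E'\<^sup>*" if "(\<rho>, v) \<in> E\<^sup>*" "v \<noteq> lf" for v
    using that
  proof (induction rule: rtrancl_induct)
    case base then show ?case by simp
  next
    case (step w v)
    have "w \<noteq> lf" using step(2) sl by auto
    then have "(\<rho>, w) \<in> E'\<^sup>*" using step(3) by simp
    moreover have "(w, v) \<in> E'" using step(2) step(4) unfolding E'_def by auto
    ultimately show ?case by (rule rtrancl_into_rtrancl)
  qed
  have tr: "tree (S - {lf}) E' \<rho>"
    unfolding tree_def
  proof (intro conjI ballI)
    show "finite (S - {lf})" using fs by simp
    show "E' \<subseteq> (S - {lf}) \<times> (S - {lf})" by (rule sub')
    show "acyclic E'" using ac unfolding E'_def by (rule acyclic_subset) auto
    show "\<rho> \<in> S - {lf}" using r l by simp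
  next
    fix v assume "v \<in> S - {lf}"
    then show "(\<rho>, v) \<in> E'\<^sup>*" using reach reach' by auto
  next
    fix v assume v: "v \<in> S - {lf} - {\<rho>}"
    then have "{u. (u, v) \<in> E'} = {u. (u, v) \<in> E}" unfolding E'_def by auto
    then show "indeg E' v = 1" using ind v unfolding indeg_def by auto
  qed
  have od': "outdeg E' v = (if v = j then outdeg E v - 1 else outdeg E v)" for v
  proof -
    have "{w. (v, w) \<in> E'} = {w. (v, w) \<in> E} - (if v = j then {lf} else {})"
      unfolding E'_def by auto
    then show ?thesis unfolding outdeg_def using jl finite_succ[OF fs sub, of v]
      by (auto simp: card_Diff_singleton)
  qed
  have "outdeg E j \<ge> 1" using jl finite_succ[OF fs sub, of j] unfolding outdeg_def
    by (auto simp: Suc_le_eq card_gt_0_iff)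
  moreover have "E = insert (j, lf) E'" using jl unfolding E'_def by auto
  ultimately show ?thesis using that[of j] jl jS jne tr od' unfolding E'_def by auto
qed

lemma leaf_add:
  assumes T: "tree S E \<rho>" and l: "lf \<notin> S" and j: "j \<in> S"
  shows "tree (insert lf S) (insert (j, lf) E) \<rho>"
    and "outdeg (insert (j, lf) E) v = (if v = j then Suc (outdeg E v) else outdeg E v)"
proof -
  have fs: "finite S" and sub: "E \<subseteq> S \<times> S" and ac: "acyclic E" and r: "\<rho> \<in> S"
    and reach: "\<forall>v\<in>S. (\<rho>, v) \<in> E\<^sup>*" and ind: "\<forall>v\<in>S - {\<rho>}. indeg E v = 1"
    using T unfolding tree_def by auto
  have nl: "(lf, x) \<notin> E" "(x, lf) \<notin> E" for x using sub l by auto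
  have "(lf, j) \<notin> E\<^sup>*"
  proof
    assume "(lf, j) \<in> E\<^sup>*"
    moreover have "lf \<noteq> j" using l j by auto
    ultimately obtain x where "(lf, x) \<in> E" by (metis converse_rtranclE)
    then show False using nl by auto
  qed
  then have ac': "acyclic (insert (j, lf) E)" using ac by (simp add: acyclic_insert)
  let ?E = "insert (j, lf) E"
  have mono: "E\<^sup>* \<subseteq> ?E\<^sup>*" by (rule rtrancl_mono) auto
  show "tree (insert lf S) ?E \<rho>"
    unfolding tree_def
  proof (intro conjI ballI)
    show "finite (insert lf S)" using fs by simp
    show "?E \<subseteq> insert lf S \<times> insert lf S" using sub j by auto
    show "acyclic ?E" by (rule ac')
    show "\<rho> \<in> insert lf S" using r by simp
  next
    fix v assume v: "v \<in> insert lf S"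
    show "(\<rho>, v) \<in> ?E\<^sup>*"
    proof (cases "v = lf")
      case True
      have "(\<rho>, j) \<in> ?E\<^sup>*" using reach j mono by auto
      then show ?thesis using True by (meson insertI1 rtrancl.rtrancl_into_rtrancl)
    next
      case False then show ?thesis using v reach mono by auto
    qed
  next
    fix v assume v: "v \<in> insert lf S - {\<rho>}"
    show "indeg ?E v = 1"
    proof (cases "v = lf")
      case True
      then have "{u. (u, v) \<in> ?E} = {j}" using nl by auto
      then show ?thesis unfolding indeg_def by simp
    next
      case False
      then have "{u. (u, v) \<in> ?E} = {u. (u, v) \<in> E}" by auto
      then show ?thesis using ind v False unfolding indeg_def by auto
    qed
  qed
  show "outdeg ?E v = (if v = j then Suc (outdeg E v) else outdeg E v)"
  proof -
    have "{w. (v, w) \<in> ?E} = (if v = j then insert lf {w. (v, w) \<in> E} else {w. (v, w) \<in> E})" by auto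
    moreover have "lf \<notin> {w. (v, w) \<in> E}" using nl by auto
    ultimately show ?thesis unfolding outdeg_def using finite_succ[OF fs sub, of v] by auto
  qed
qed

lemma tree_sub: "tree S E \<rho> \<Longrightarrow> E \<subseteq> S \<times> S"
  unfolding tree_def by blast

lemma tree_singleton_iff: "tree {\<rho>} E \<rho> \<longleftrightarrow> E = {}"
proof
  assume T: "tree {\<rho>} E \<rho>"
  then have "E \<subseteq> {(\<rho>, \<rho>)}" unfolding tree_def by auto
  moreover have "(\<rho>, \<rho>) \<notin> E" using T unfolding tree_def acyclic_def by auto
  ultimately show "E = {}" by auto
next
  assume "E = {}"
  then show "tree {\<rho>} E \<rho>" unfolding tree_def by (auto simp: indeg_def acyclic_def)
qed

lemma RT_finite: "finite S \<Longrightarrow> finite (RT S \<rho> d)"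
proof -
  assume fs: "finite S"
  have "RT S \<rho> d \<subseteq> Pow (S \<times> S)" unfolding RT_def tree_def by auto
  moreover have "finite (Pow (S \<times> S))" using fs by simp
  ultimately show ?thesis by (rule finite_subset)
qed

lemma prod_fact_update:
  fixes d :: "'a \<Rightarrow> nat"
  assumes "finite A" "j \<in> A" "d j > 0"
  shows "(\<Prod>v\<in>A. fact (d v) :: nat) = d j * (\<Prod>v\<in>A. fact ((d(j := d j - 1)) v))"
proof -
  have "(\<Prod>v\<in>A. fact (d v) :: nat) = fact (d j) * (\<Prod>v\<in>A - {j}. fact (d v))"
    using assms by (simp add: prod.remove)
  moreover have "(\<Prod>v\<in>A. fact ((d(j := d j - 1)) v) :: nat) = fact (d j - 1) * (\<Prod>v\<in>A - {j}. fact (d v))"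
    using assms by (simp add: prod.remove)
  moreover have "(fact (d j) :: nat) = d j * fact (d j - 1)" using assms(3)
    by (simp add: fact_reduce)
  ultimately show ?thesis by simp
qed

lemma sum_update_minus:
  fixes d :: "'a \<Rightarrow> nat"
  assumes "finite A" "j \<in> A" "d j > 0"
  shows "(\<Sum>v\<in>A. (d(j := d j - 1)) v) + 1 = (\<Sum>v\<in>A. d v)"
proof -
  have "(\<Sum>v\<in>A. d v) = d j + (\<Sum>v\<in>A - {j}. d v)" using assms by (simp add: sum.remove)
  moreover have "(\<Sum>v\<in>A. (d(j := d j - 1)) v) = (d j - 1) + (\<Sum>v\<in>A - {j}. d v)"
    using assms by (simp add: sum.remove)
  ultimately show ?thesis using assms(3) by simp
qed

lemma sum_aux_rho:
  fixes d :: "'a \<Rightarrow> nat"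
  assumes "finite A" "\<rho> \<in> A" "d \<rho> > 0"
  shows "(\<Sum>j\<in>A. d j * (d(j := d j - 1)) \<rho>) + d \<rho> = (\<Sum>j\<in>A. d j) * d \<rho>"
proof -
  have "(\<Sum>j\<in>A - {\<rho>}. d j * (d(j := d j - 1)) \<rho>) = (\<Sum>j\<in>A - {\<rho>}. d j * d \<rho>)"
    by (intro sum.cong) auto
  then have "(\<Sum>j\<in>A. d j * (d(j := d j - 1)) \<rho>) = d \<rho> * (d \<rho> - 1) + (\<Sum>j\<in>A - {\<rho>}. d j * d \<rho>)"
    using assms by (simp add: sum.remove)
  moreover have "(\<Sum>j\<in>A. d j) * d \<rho> = d \<rho> * d \<rho> + (\<Sum>j\<in>A - {\<rho>}. d j * d \<rho>)"
    using assms by (simp add: sum.remove sum_distrib_right distrib_right)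
  moreover have "d \<rho> * (d \<rho> - 1) + d \<rho> = d \<rho> * d \<rho>" using assms(3)
    by (cases "d \<rho>") auto
  ultimately show ?thesis by simp
qed

lemma RT_count_aux:
  "finite S \<Longrightarrow> \<rho> \<in> S \<Longrightarrow> card S = Suc n \<Longrightarrow>
   card (RT S \<rho> d) * (\<Prod>v\<in>S. fact (d v)) =
     (if (\<Sum>v\<in>S. d v) = n then (if n = 0 then 1 else fact (n - 1) * d \<rho>) else 0)"
proof (induction n arbitrary: S d)
  case 0
  then obtain x where "S = {x}" by (auto simp: card_Suc_eq)
  then have S: "S = {\<rho>}" using 0 by simp
  have "RT S \<rho> d = (if d \<rho> = 0 then {{}} else {})"
    unfolding RT_def S tree_singleton_iff by (auto simp: outdeg_def)
  then show ?case using S by simp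
next
  case (Suc n)
  note fs = Suc.prems(1) and r = Suc.prems(2) and cS = Suc.prems(3)
  show ?case
  proof (cases "(\<Sum>v\<in>S. d v) = Suc n")
    case False
    have "RT S \<rho> d = {}"
    proof (rule ccontr)
      assume "RT S \<rho> d \<noteq> {}"
      then obtain E where E: "tree S E \<rho>" "\<forall>v\<in>S. outdeg E v = d v" unfolding RT_def by auto
      then have "(\<Sum>v\<in>S. d v) = card S - 1" using tree_sum_outdeg[OF E(1)] by simp
      then show False using False cS by simp
    qed
    then show ?thesis using False by simp
  next
    case sumd: True
    show ?thesis
    proof (cases "d \<rho> = 0")
      case True
      have "RT S \<rho> d = {}"
      proof (rule ccontr)
        assume "RT S \<rho> d \<noteq> {}"
        then obtain E where E: "tree S E \<rho>" "\<forall>v\<in>S. outdeg E v = d v" unfolding RT_def by auto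
        then have "outdeg E \<rho> \<ge> 1" using tree_root_outdeg[OF E(1)] cS by simp
        then show False using E r True by auto
      qed
      then show ?thesis using True by simp
    next
      case dr: False
      have "\<exists>lf\<in>S. d lf = 0"
      proof (rule ccontr)
        assume "\<not> (\<exists>lf\<in>S. d lf = 0)"
        then have "\<forall>v\<in>S. 1 \<le> d v" by (simp add: Suc_le_eq)
        then have "(\<Sum>v\<in>S. 1) \<le> (\<Sum>v\<in>S. d v)" by (intro sum_mono) auto
        then show False using sumd cS by simp
      qed
      then obtain lf where lf: "lf \<in> S" "d lf = 0" by blast
      have lr: "lf \<noteq> \<rho>" using lf dr by auto
      define S' where "S' = S - {lf}"
      define J where "J = {j \<in> S'. d j > 0}"
      define dj where "dj = (\<lambda>j. d(j := d j - 1))"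
      have fS': "finite S'" using fs unfolding S'_def by simp
      have cS': "card S' = Suc n" using cS lf fs unfolding S'_def by simp
      have rS': "\<rho> \<in> S'" using r lr unfolding S'_def by simp
      have fJ: "finite J" using fS' unfolding J_def by simp
      have S_eq: "S = insert lf S'" using lf unfolding S'_def by auto
      have lS': "lf \<notin> S'" unfolding S'_def by simp
      have RT_eq: "RT S \<rho> d = (\<Union>j\<in>J. insert (j, lf) ` RT S' \<rho> (dj j))"
      proof (intro equalityI subsetI)
        fix E assume "E \<in> RT S \<rho> d"
        then have E: "tree S E \<rho>" "\<forall>v\<in>S. outdeg E v = d v" unfolding RT_def by auto
        have od0: "outdeg E lf = 0" using E lf by simp
        show "E \<in> (\<Union>j\<in>J. insert (j, lf) ` RT S' \<rho> (dj j))"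
        proof (rule leaf_remove[OF E(1) lf(1) lr od0])
          fix j assume j: "(j, lf) \<in> E" "j \<in> S - {lf}" "tree (S - {lf}) (E - {(j, lf)}) \<rho>"
            "E = insert (j, lf) (E - {(j, lf)})"
            "\<And>v. outdeg (E - {(j, lf)}) v = (if v = j then outdeg E v - 1 else outdeg E v)"
            "outdeg E j \<ge> 1"
          have jJ: "j \<in> J" using j(2) j(6) E(2) unfolding J_def S'_def by auto
          define E0 where "E0 = E - {(j, lf)}"
          have E0E: "E = insert (j, lf) E0" using j(4) unfolding E0_def .
          have "E0 \<in> RT S' \<rho> (dj j)"
            unfolding RT_def dj_def E0_def using j(3) j(5) E(2) unfolding S'_def by auto
          then have "insert (j, lf) E0 \<in> (\<Union>j\<in>J. insert (j, lf) ` RT S' \<rho> (dj j))" using jJ by blast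
          then show "E \<in> (\<Union>j\<in>J. insert (j, lf) ` RT S' \<rho> (dj j))" unfolding E0E .
        qed
      next
        fix E assume "E \<in> (\<Union>j\<in>J. insert (j, lf) ` RT S' \<rho> (dj j))"
        then obtain j E' where j: "j \<in> J" and E': "E' \<in> RT S' \<rho> (dj j)" and E: "E = insert (j, lf) E'"
          by auto
        have T': "tree S' E' \<rho>" and od': "\<forall>v\<in>S'. outdeg E' v = dj j v" using E' unfolding RT_def by auto
        have jS': "j \<in> S'" using j unfolding J_def by auto
        have "tree S E \<rho>" using leaf_add(1)[OF T' lS' jS'] S_eq E by simp
        moreover have "outdeg E v = d v" if v: "v \<in> S" for v
        proof -
          have "outdeg E v = (if v = j then Suc (outdeg E' v) else outdeg E' v)"
            using leaf_add(2)[OF T' lS' jS'] E by simp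
          moreover have "outdeg E' lf = 0"
          proof -
            have "E' \<subseteq> S' \<times> S'" using T' by (rule tree_sub)
            then have "{w. (lf, w) \<in> E'} = {}" using lS' by auto
            then show ?thesis unfolding outdeg_def by simp
          qed
          ultimately show ?thesis using v od' j lf jS' lS' unfolding S_eq dj_def J_def
            by (cases "v = lf") auto
        qed
        ultimately show "E \<in> RT S \<rho> d" unfolding RT_def by auto
      qed
      have sub_RT: "E' \<subseteq> S' \<times> S'" if "E' \<in> RT S' \<rho> e" for E' e
        using that tree_sub[of S' E' \<rho>] unfolding RT_def by auto
      have card_RT: "card (RT S \<rho> d) = (\<Sum>j\<in>J. card (RT S' \<rho> (dj j)))"
      proof -
        have "card (RT S \<rho> d) = (\<Sum>j\<in>J. card (insert (j, lf) ` RT S' \<rho> (dj j)))"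
          unfolding RT_eq
        proof (rule card_UN_disjoint[OF fJ])
          show "\<forall>j\<in>J. finite (insert (j, lf) ` RT S' \<rho> (dj j))" using RT_finite[OF fS'] by auto
          show "\<forall>i\<in>J. \<forall>j\<in>J. i \<noteq> j \<longrightarrow>
            insert (i, lf) ` RT S' \<rho> (dj i) \<inter> insert (j, lf) ` RT S' \<rho> (dj j) = {}"
          proof (intro ballI impI)
            fix i j assume "i \<in> J" "j \<in> J" "i \<noteq> j"
            show "insert (i, lf) ` RT S' \<rho> (dj i) \<inter> insert (j, lf) ` RT S' \<rho> (dj j) = {}"
            proof (rule ccontr)
              assume "insert (i, lf) ` RT S' \<rho> (dj i) \<inter> insert (j, lf) ` RT S' \<rho> (dj j) \<noteq> {}"
              then obtain E1 E2 where E12: "E1 \<in> RT S' \<rho> (dj i)" "E2 \<in> RT S' \<rho> (dj j)"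
                "insert (i, lf) E1 = insert (j, lf) E2" by blast
              have "(i, lf) \<in> insert (j, lf) E2" using E12(3) by blast
              moreover have "E2 \<subseteq> S' \<times> S'" using sub_RT[OF E12(2)] .
              ultimately have "(i, lf) \<in> insert (j, lf) E2" "E2 \<subseteq> S' \<times> S'" by blast+
              then show False using \<open>i \<noteq> j\<close> lS' by auto
            qed
          qed
        qed
        also have "\<dots> = (\<Sum>j\<in>J. card (RT S' \<rho> (dj j)))"
        proof (rule sum.cong[OF refl])
          fix j assume "j \<in> J"
          have "inj_on (insert (j, lf)) (RT S' \<rho> (dj j))"
          proof (rule inj_onI)
            fix E1 E2 assume "E1 \<in> RT S' \<rho> (dj j)" "E2 \<in> RT S' \<rho> (dj j)"
              "insert (j, lf) E1 = insert (j, lf) E2"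
            moreover have n1: "(j, lf) \<notin> E1" using sub_RT[OF calculation(1)] lS' by blast
            moreover have n2: "(j, lf) \<notin> E2" using sub_RT[OF calculation(2)] lS' by blast
            ultimately show "E1 = E2" using insert_ident[OF n1 n2] by simp
          qed
          then show "card (insert (j, lf) ` RT S' \<rho> (dj j)) = card (RT S' \<rho> (dj j))"
            by (rule card_image)
        qed
        finally show ?thesis .
      qed
      have prodS: "(\<Prod>v\<in>S. fact (d v) :: nat) = (\<Prod>v\<in>S'. fact (d v))"
        using fS' lS' lf unfolding S_eq by simp
      have trm: "card (RT S' \<rho> (dj j)) * (\<Prod>v\<in>S. fact (d v)) =
          d j * (if n = 0 then 1 else fact (n - 1) * dj j \<rho>)" if jJ: "j \<in> J" for j
      proof -
        have jS': "j \<in> S'" "d j > 0" using jJ unfolding J_def by auto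
        have "(\<Prod>v\<in>S. fact (d v) :: nat) = d j * (\<Prod>v\<in>S'. fact (dj j v))"
          unfolding prodS dj_def by (rule prod_fact_update[of S' j d, OF fS' jS'(1) jS'(2)])
        moreover have "(\<Sum>v\<in>S'. dj j v) = n"
        proof -
          have "(\<Sum>v\<in>S'. dj j v) + 1 = (\<Sum>v\<in>S'. d v)"
            unfolding dj_def by (rule sum_update_minus[of S' j d, OF fS' jS'(1) jS'(2)])
          moreover have "(\<Sum>v\<in>S. d v) = (\<Sum>v\<in>S'. d v)" using fS' lS' lf unfolding S_eq by simp
          ultimately show ?thesis using sumd by simp
        qed
        moreover have "card (RT S' \<rho> (dj j)) * (\<Prod>v\<in>S'. fact (dj j v)) =
            (if (\<Sum>v\<in>S'. dj j v) = n then (if n = 0 then 1 else fact (n - 1) * dj j \<rho>) else 0)"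
          by (rule Suc.IH[OF fS' rS' cS'])
        ultimately show ?thesis by (simp add: ac_simps)
      qed
      have "card (RT S \<rho> d) * (\<Prod>v\<in>S. fact (d v)) =
          (\<Sum>j\<in>J. d j * (if n = 0 then 1 else fact (n - 1) * dj j \<rho>))"
        unfolding card_RT sum_distrib_right using trm by (intro sum.cong) auto
      also have "\<dots> = (\<Sum>j\<in>S'. d j * (if n = 0 then 1 else fact (n - 1) * dj j \<rho>))"
        using fS' unfolding J_def by (intro sum.mono_neutral_left) auto
      also have "\<dots> = fact n * d \<rho>"
      proof (cases "n = 0")
        case True
        then obtain x where "S' = {x}" using cS' by (auto simp: card_Suc_eq)
        then have "S' = {\<rho>}" using rS' by simp
        moreover have "(\<Sum>v\<in>S'. d v) = Suc n" using sumd fS' lS' lf unfolding S_eq by simp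
        ultimately show ?thesis using True by simp
      next
        case False
        have s': "(\<Sum>v\<in>S'. d v) = Suc n" using sumd fS' lS' lf unfolding S_eq by simp
        have "(\<Sum>j\<in>S'. d j * (if n = 0 then 1 else fact (n - 1) * dj j \<rho>)) =
            fact (n - 1) * (\<Sum>j\<in>S'. d j * dj j \<rho>)"
          using False by (simp add: sum_distrib_left ac_simps)
        moreover have "(\<Sum>j\<in>S'. d j * dj j \<rho>) + d \<rho> = Suc n * d \<rho>"
          using sum_aux_rho[OF fS' rS'] dr s' unfolding dj_def by simp
        then have "(\<Sum>j\<in>S'. d j * dj j \<rho>) = n * d \<rho>" by simp
        moreover have "fact (n - 1) * (n * d \<rho>) = (fact n :: nat) * d \<rho>" using False
          by (simp add: fact_reduce[of n])
        ultimately show ?thesis by simp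
      qed
      finally show ?thesis using sumd by simp
    qed
  qed
qed

lemma RT_count:
  assumes "finite S" "\<rho> \<in> S"
  shows "card (RT S \<rho> d) * (\<Prod>v\<in>S. fact (d v)) =
     (if (\<Sum>v\<in>S. d v) = card S - 1 then (if card S = 1 then 1 else fact (card S - 2) * d \<rho>) else 0)"
proof -
  have "card S > 0" using assms by (auto simp: card_gt_0_iff)
  then obtain n where n: "card S = Suc n" using gr0_implies_Suc by blast
  show ?thesis using RT_count_aux[OF assms n] n by (simp add: numeral_2_eq_2)
qed

definition pat :: "'a set \<Rightarrow> 'a set \<Rightarrow> 'a \<Rightarrow> nat" where
  "pat P B v = (if v \<in> P then 1 else if v \<in> B then 2 else 0)"

definition DT :: "'a set \<Rightarrow> 'a \<Rightarrow> ('a \<times> 'a) set set" where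
  "DT S r = (\<Union>B \<in> Pow (S - {r}). RT S r (pat {r} B))"

definition PBs :: "'a set \<Rightarrow> ('a set \<times> 'a set) set" where
  "PBs U = {(P, B). P \<subseteq> U \<and> card P = 2 \<and> B \<subseteq> U - P}"

definition UT :: "'a set \<Rightarrow> ('a \<times> 'a) set set" where
  "UT U = (\<Union>\<rho>\<in>U. \<Union>PB\<in>PBs U. RT U \<rho> (pat (fst PB) (snd PB)))"

lemma pat_prod:
  assumes "finite S" "P \<inter> B = {}"
  shows "(\<Prod>v\<in>S. fact (pat P B v) :: nat) = 2 ^ card (S \<inter> B)"
proof -
  have "(\<Prod>v\<in>S. fact (pat P B v) :: nat) = (\<Prod>v\<in>S. if v \<in> B then 2 else 1)"
    using assms(2) by (intro prod.cong) (auto simp: pat_def)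
  also have "\<dots> = (\<Prod>v\<in>S \<inter> {v. v \<in> B}. 2) * (\<Prod>v\<in>S \<inter> - {v. v \<in> B}. 1)"
    using assms(1) by (rule prod.If_cases)
  also have "\<dots> = 2 ^ card (S \<inter> B)" by simp
  finally show ?thesis .
qed

lemma pat_sum:
  assumes "finite S" "P \<subseteq> S" "B \<subseteq> S" "P \<inter> B = {}"
  shows "(\<Sum>v\<in>S. pat P B v) = card P + 2 * card B"
proof -
  have "(\<Sum>v\<in>S. pat P B v) = (\<Sum>v\<in>S. (if v \<in> P then 1 else 0) + (if v \<in> B then 2 else 0))"
    using assms(4) by (intro sum.cong) (auto simp: pat_def)
  also have "\<dots> = (\<Sum>v\<in>S. if v \<in> P then 1 else 0) + (\<Sum>v\<in>S. if v \<in> B then 2 else 0)"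
    by (rule sum.distrib)
  also have "(\<Sum>v\<in>S. if v \<in> P then 1 else 0) = card (S \<inter> P)"
    using assms(1) by (simp add: sum.If_cases)
  also have "(\<Sum>v\<in>S. if v \<in> B then 2 else 0) = 2 * card (S \<inter> B)"
    using assms(1) by (simp add: sum.If_cases)
  finally have "(\<Sum>v\<in>S. pat P B v) = card (S \<inter> P) + 2 * card (S \<inter> B)" .
  moreover have "S \<inter> P = P" "S \<inter> B = B" using assms by auto
  ultimately show ?thesis by simp
qed

lemma pat_inj:
  assumes "P \<subseteq> S" "B \<subseteq> S" "P' \<subseteq> S" "B' \<subseteq> S" "P \<inter> B = {}" "P' \<inter> B' = {}"
    and "\<forall>v\<in>S. pat P B v = pat P' B' v"
  shows "P = P' \<and> B = B'"
proof -
  have "v \<in> P \<longleftrightarrow> v \<in> P'" if "v \<in> S" for v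
    using assms(7) that unfolding pat_def by (auto split: if_splits)
  moreover have "v \<in> B \<longleftrightarrow> v \<in> B'" if "v \<in> S" for v
    using assms(7) that assms(5,6) unfolding pat_def by (auto split: if_splits)
  ultimately show ?thesis using assms(1-4) by blast
qed

lemma RT_disj:
  assumes "v \<in> S" "d1 v \<noteq> d2 v"
  shows "RT S \<rho> d1 \<inter> RT S \<rho> d2 = {}"
  using assms unfolding RT_def by auto

lemma RT_count_real:
  assumes "finite S" "\<rho> \<in> S"
  shows "real (card (RT S \<rho> d)) =
     (if (\<Sum>v\<in>S. d v) = card S - 1 then (if card S = 1 then 1 else fact (card S - 2) * d \<rho>) else 0)
       / (\<Prod>v\<in>S. fact (d v))"
proof -
  have "real (card (RT S \<rho> d) * (\<Prod>v\<in>S. fact (d v))) =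
     real (if (\<Sum>v\<in>S. d v) = card S - 1 then (if card S = 1 then 1 else fact (card S - 2) * d \<rho>) else 0)"
    using RT_count[OF assms, of d] by simp
  moreover have "real (\<Prod>v\<in>S. fact (d v) :: nat) = (\<Prod>v\<in>S. fact (d v))"
    by (simp add: of_nat_prod)
  moreover have "(\<Prod>v\<in>S. fact (d v) :: real) > 0" by (intro prod_pos) auto
  ultimately show ?thesis by (simp add: field_simps of_nat_mult split: if_splits)
qed

lemma card_subsets_k:
  "finite A \<Longrightarrow> card {B. B \<subseteq> A \<and> card B = k} = card A choose k"
  by (rule n_subsets)

definition dtc :: "nat \<Rightarrow> real" where
  "dtc m = (if 2 \<le> m \<and> even m then real ((m - 1) choose ((m - 2) div 2)) * fact (m - 2) / 2 ^ ((m - 2) div 2) else 0)"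

definition utc :: "nat \<Rightarrow> real" where
  "utc u = (if 3 \<le> u \<and> odd u then real (u choose 2) * real ((u - 2) choose ((u - 3) div 2)) * fact (u - 1) / 2 ^ ((u - 3) div 2) else 0)"

lemma DT_card:
  assumes fs: "finite S" and r: "r \<in> S"
  shows "real (card (DT S r)) = dtc (card S)"
proof -
  let ?m = "card S"
  have fP: "finite (Pow (S - {r}))" using fs by simp
  have "card (DT S r) = (\<Sum>B\<in>Pow (S - {r}). card (RT S r (pat {r} B)))"
    unfolding DT_def
  proof (rule card_UN_disjoint[OF fP])
    show "\<forall>B\<in>Pow (S - {r}). finite (RT S r (pat {r} B))" using RT_finite[OF fs] by blast
    show "\<forall>B\<in>Pow (S - {r}). \<forall>B'\<in>Pow (S - {r}). B \<noteq> B' \<longrightarrow> RT S r (pat {r} B) \<inter> RT S r (pat {r} B') = {}"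
    proof (intro ballI impI)
      fix B B' assume B: "B \<in> Pow (S - {r})" "B' \<in> Pow (S - {r})" "B \<noteq> B'"
      then obtain v where v: "v \<in> S - {r}" "(v \<in> B) \<noteq> (v \<in> B')" by blast
      then have "pat {r} B v \<noteq> pat {r} B' v" unfolding pat_def by auto
      then show "RT S r (pat {r} B) \<inter> RT S r (pat {r} B') = {}" using v by (intro RT_disj) auto
    qed
  qed
  then have "real (card (DT S r)) = (\<Sum>B\<in>Pow (S - {r}). real (card (RT S r (pat {r} B))))" by simp
  also have "\<dots> = (\<Sum>B\<in>Pow (S - {r}). if 2 * card B + 2 = ?m then fact (?m - 2) / 2 ^ card B else 0)"
  proof (rule sum.cong[OF refl])
    fix B assume B: "B \<in> Pow (S - {r})"
    have fB: "finite B" using B fs by (auto intro: finite_subset)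
    have disj: "{r} \<inter> B = {}" using B by auto
    have sm: "(\<Sum>v\<in>S. pat {r} B v) = 1 + 2 * card B" using pat_sum[OF fs _ _ disj] B r by auto
    have pr: "(\<Prod>v\<in>S. fact (pat {r} B v) :: real) = 2 ^ card B"
    proof -
      have "(\<Prod>v\<in>S. fact (pat {r} B v) :: nat) = 2 ^ card (S \<inter> B)" by (rule pat_prod[OF fs disj])
      moreover have "S \<inter> B = B" using B by auto
      ultimately have "(\<Prod>v\<in>S. fact (pat {r} B v) :: nat) = 2 ^ card B" by simp
      then have "real (\<Prod>v\<in>S. fact (pat {r} B v) :: nat) = 2 ^ card B" by simp
      then show ?thesis by (simp add: of_nat_prod)
    qed
    have pr1: "pat {r} B r = 1" unfolding pat_def by simp
    show "real (card (RT S r (pat {r} B))) = (if 2 * card B + 2 = ?m then fact (?m - 2) / 2 ^ card B else 0)"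
      unfolding RT_count_real[OF fs r] sm pr pr1 by auto
  qed
  also have "\<dots> = dtc ?m"
  proof (cases "2 \<le> ?m \<and> even ?m")
    case True
    define i where "i = (?m - 2) div 2"
    have mi: "?m = 2 * i + 2" using True unfolding i_def by auto
    have "(\<Sum>B\<in>Pow (S - {r}). if 2 * card B + 2 = ?m then fact (?m - 2) / 2 ^ card B else 0 :: real) =
        (\<Sum>B\<in>{B \<in> Pow (S - {r}). card B = i}. fact (?m - 2) / 2 ^ i)"
      using fP unfolding mi by (simp add: sum.inter_filter[symmetric] cong: if_cong)
    also have "\<dots> = real (card {B. B \<subseteq> S - {r} \<and> card B = i}) * (fact (?m - 2) / 2 ^ i)"
      by (simp add: Pow_def conj_commute)
    also have "card {B. B \<subseteq> S - {r} \<and> card B = i} = (?m - 1) choose i"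
      using card_subsets_k[of "S - {r}" i] fs r by simp
    finally show ?thesis using True unfolding dtc_def i_def by simp
  next
    case False
    have "(if 2 * card B + 2 = ?m then fact (?m - 2) / 2 ^ card B else 0 :: real) = 0" for B
    proof -
      have "2 * card B + 2 \<noteq> ?m" using False by presburger
      then show ?thesis by simp
    qed
    then have sz: "(\<Sum>B\<in>Pow (S - {r}). if 2 * card B + 2 = ?m then fact (?m - 2) / 2 ^ card B else 0 :: real) = 0"
      by (intro sum.neutral ballI) blast
    have dz: "dtc ?m = 0" using False unfolding dtc_def by auto
    show ?thesis by (rule trans[OF sz dz[symmetric]])
  qed
  finally show ?thesis .
qed

lemma PBs_finite: "finite U \<Longrightarrow> finite (PBs U)"
proof -
  assume fU: "finite U"
  have "PBs U \<subseteq> Pow U \<times> Pow U" unfolding PBs_def by auto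
  moreover have "finite (Pow U \<times> Pow U)" using fU by simp
  ultimately show ?thesis by (rule finite_subset)
qed

lemma PBs_card_filter:
  assumes fU: "finite U"
  shows "card {PB \<in> PBs U. card (snd PB) = i} = (card U choose 2) * ((card U - 2) choose i)"
proof -
  have eq: "{PB \<in> PBs U. card (snd PB) = i} = Sigma {P. P \<subseteq> U \<and> card P = 2} (\<lambda>P. {B. B \<subseteq> U - P \<and> card B = i})"
    unfolding PBs_def by auto
  have fA: "finite {P. P \<subseteq> U \<and> card P = 2}" using fU by simp
  have "card (Sigma {P. P \<subseteq> U \<and> card P = 2} (\<lambda>P. {B. B \<subseteq> U - P \<and> card B = i})) =
      (\<Sum>P\<in>{P. P \<subseteq> U \<and> card P = 2}. card {B. B \<subseteq> U - P \<and> card B = i})"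
    by (rule card_SigmaI[OF fA]) (use fU in auto)
  also have "\<dots> = (\<Sum>P\<in>{P. P \<subseteq> U \<and> card P = 2}. (card U - 2) choose i)"
  proof (rule sum.cong[OF refl])
    fix P assume P: "P \<in> {P. P \<subseteq> U \<and> card P = 2}"
    have "card (U - P) = card U - card P"
      using P fU by (intro card_Diff_subset) (auto intro: finite_subset)
    then have "card (U - P) = card U - 2" using P by simp
    then show "card {B. B \<subseteq> U - P \<and> card B = i} = (card U - 2) choose i"
      using card_subsets_k[of "U - P" i] fU by simp
  qed
  also have "\<dots> = (card U choose 2) * ((card U - 2) choose i)"
    using card_subsets_k[OF fU, of 2] by simp
  finally show ?thesis unfolding eq .
qed

lemma UT_card:
  assumes fU: "finite U"
  shows "real (card (UT U)) = utc (card U)"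
proof -
  let ?u = "card U"
  have fPB: "finite (PBs U)" by (rule PBs_finite[OF fU])
  have inner: "card (\<Union>PB\<in>PBs U. RT U \<rho> (pat (fst PB) (snd PB))) =
      (\<Sum>PB\<in>PBs U. card (RT U \<rho> (pat (fst PB) (snd PB))))" for \<rho>
  proof (rule card_UN_disjoint[OF fPB])
    show "\<forall>PB\<in>PBs U. finite (RT U \<rho> (pat (fst PB) (snd PB)))" using RT_finite[OF fU] by blast
    show "\<forall>PB\<in>PBs U. \<forall>PB'\<in>PBs U. PB \<noteq> PB' \<longrightarrow>
        RT U \<rho> (pat (fst PB) (snd PB)) \<inter> RT U \<rho> (pat (fst PB') (snd PB')) = {}"
    proof (intro ballI impI)
      fix PB PB' assume A: "PB \<in> PBs U" "PB' \<in> PBs U" "PB \<noteq> PB'"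
      obtain P B P' B' where PB: "PB = (P, B)" "PB' = (P', B')" by (cases PB, cases PB') auto
      have props: "P \<subseteq> U" "B \<subseteq> U" "P' \<subseteq> U" "B' \<subseteq> U" "P \<inter> B = {}" "P' \<inter> B' = {}"
        using A unfolding PB PBs_def by auto
      have "\<not> (\<forall>v\<in>U. pat P B v = pat P' B' v)"
        using pat_inj[OF props] A(3) unfolding PB by auto
      then obtain v where "v \<in> U" "pat P B v \<noteq> pat P' B' v" by blast
      then show "RT U \<rho> (pat (fst PB) (snd PB)) \<inter> RT U \<rho> (pat (fst PB') (snd PB')) = {}"
        unfolding PB by (intro RT_disj) auto
    qed
  qed
  have "card (UT U) = (\<Sum>\<rho>\<in>U. card (\<Union>PB\<in>PBs U. RT U \<rho> (pat (fst PB) (snd PB))))"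
    unfolding UT_def
  proof (rule card_UN_disjoint[OF fU])
    show "\<forall>\<rho>\<in>U. finite (\<Union>PB\<in>PBs U. RT U \<rho> (pat (fst PB) (snd PB)))"
      using RT_finite[OF fU] fPB by blast
    show "\<forall>\<rho>\<in>U. \<forall>\<rho>'\<in>U. \<rho> \<noteq> \<rho>' \<longrightarrow> (\<Union>PB\<in>PBs U. RT U \<rho> (pat (fst PB) (snd PB))) \<inter>
        (\<Union>PB\<in>PBs U. RT U \<rho>' (pat (fst PB) (snd PB))) = {}"
    proof (intro ballI impI)
      fix \<rho> \<rho>' assume "\<rho> \<in> U" "\<rho>' \<in> U" "\<rho> \<noteq> \<rho>'"
      show "(\<Union>PB\<in>PBs U. RT U \<rho> (pat (fst PB) (snd PB))) \<inter>
        (\<Union>PB\<in>PBs U. RT U \<rho>' (pat (fst PB) (snd PB))) = {}"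
      proof (rule ccontr)
        assume "(\<Union>PB\<in>PBs U. RT U \<rho> (pat (fst PB) (snd PB))) \<inter>
          (\<Union>PB\<in>PBs U. RT U \<rho>' (pat (fst PB) (snd PB))) \<noteq> {}"
        then obtain E where "tree U E \<rho>" "tree U E \<rho>'" unfolding RT_def by blast
        then have "\<rho> = \<rho>'" by (rule tree_root_unique)
        then show False using \<open>\<rho> \<noteq> \<rho>'\<close> by simp
      qed
    qed
  qed
  then have "real (card (UT U)) = (\<Sum>\<rho>\<in>U. \<Sum>PB\<in>PBs U. real (card (RT U \<rho> (pat (fst PB) (snd PB)))))"
    unfolding inner by simp
  also have "\<dots> = (\<Sum>PB\<in>PBs U. \<Sum>\<rho>\<in>U. real (card (RT U \<rho> (pat (fst PB) (snd PB)))))"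
    by (rule sum.swap)
  also have "\<dots> = (\<Sum>PB\<in>PBs U. if 2 * card (snd PB) + 3 = ?u then fact (?u - 1) / 2 ^ card (snd PB) else 0)"
  proof (rule sum.cong[OF refl])
    fix PB assume A: "PB \<in> PBs U"
    obtain P B where PB: "PB = (P, B)" by (cases PB)
    have props: "P \<subseteq> U" "B \<subseteq> U" "P \<inter> B = {}" "card P = 2" using A unfolding PB PBs_def by auto
    have u2: "?u \<ge> 2" using card_mono[OF fU props(1)] props(4) by simp
    have sm: "(\<Sum>v\<in>U. pat P B v) = 2 + 2 * card B" using pat_sum[OF fU props(1-3)] props(4) by simp
    have pr: "(\<Prod>v\<in>U. fact (pat P B v) :: real) = 2 ^ card B"
    proof -
      have "(\<Prod>v\<in>U. fact (pat P B v) :: nat) = 2 ^ card (U \<inter> B)" by (rule pat_prod[OF fU props(3)])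
      moreover have "U \<inter> B = B" using props by auto
      ultimately have "(\<Prod>v\<in>U. fact (pat P B v) :: nat) = 2 ^ card B" by simp
      then have "real (\<Prod>v\<in>U. fact (pat P B v) :: nat) = 2 ^ card B" by simp
      then show ?thesis by (simp add: of_nat_prod)
    qed
    have each: "real (card (RT U \<rho> (pat P B))) =
        (if 2 * card B + 3 = ?u then fact (?u - 2) * real (pat P B \<rho>) / 2 ^ card B else 0)"
      if "\<rho> \<in> U" for \<rho>
      unfolding RT_count_real[OF fU that] sm pr using u2 by auto
    have "(\<Sum>\<rho>\<in>U. real (card (RT U \<rho> (pat P B)))) =
        (\<Sum>\<rho>\<in>U. if 2 * card B + 3 = ?u then fact (?u - 2) * real (pat P B \<rho>) / 2 ^ card B else 0)"
      using each by (rule sum.cong[OF refl])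
    also have "\<dots> = (if 2 * card B + 3 = ?u then fact (?u - 1) / 2 ^ card B else 0)"
    proof (cases "2 * card B + 3 = ?u")
      case True
      have "(\<Sum>\<rho>\<in>U. fact (?u - 2) * real (pat P B \<rho>) / 2 ^ card B) =
          fact (?u - 2) * real (\<Sum>\<rho>\<in>U. pat P B \<rho>) / 2 ^ card B"
        by (simp add: sum_divide_distrib sum_distrib_left)
      also have "\<dots> = fact (?u - 2) * real (?u - 1) / 2 ^ card B" using sm True by simp
      also have "fact (?u - 2) * real (?u - 1) = (fact (?u - 1) :: real)"
      proof -
        have "?u - 1 = Suc (?u - 2)" using True by simp
        then show ?thesis by (simp add: fact_Suc)
      qed
      finally show ?thesis using True by simp
    next
      case False then show ?thesis by simp
    qed
    finally show "(\<Sum>\<rho>\<in>U. real (card (RT U \<rho> (pat (fst PB) (snd PB))))) =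
        (if 2 * card (snd PB) + 3 = ?u then fact (?u - 1) / 2 ^ card (snd PB) else 0)"
      unfolding PB by simp
  qed
  also have "\<dots> = utc ?u"
  proof (cases "3 \<le> ?u \<and> odd ?u")
    case True
    define i where "i = (?u - 3) div 2"
    have ui: "?u = 2 * i + 3" using True unfolding i_def by presburger
    have "(\<Sum>PB\<in>PBs U. if 2 * card (snd PB) + 3 = ?u then fact (?u - 1) / 2 ^ card (snd PB) else 0 :: real) =
        (\<Sum>PB\<in>{PB \<in> PBs U. card (snd PB) = i}. fact (?u - 1) / 2 ^ i)"
      using fPB unfolding ui by (simp add: sum.inter_filter[symmetric] cong: if_cong)
    also have "\<dots> = real (card {PB \<in> PBs U. card (snd PB) = i}) * (fact (?u - 1) / 2 ^ i)"
      by simp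
    also have "card {PB \<in> PBs U. card (snd PB) = i} = (?u choose 2) * ((?u - 2) choose i)"
      by (rule PBs_card_filter[OF fU])
    finally show ?thesis using True unfolding utc_def i_def by simp
  next
    case False
    have sz: "(\<Sum>PB\<in>PBs U. if 2 * card (snd PB) + 3 = ?u then fact (?u - 1) / 2 ^ card (snd PB) else 0 :: real) = 0"
    proof (intro sum.neutral ballI)
      fix PB
      have "2 * card (snd PB) + 3 \<noteq> ?u" using False by presburger
      then show "(if 2 * card (snd PB) + 3 = ?u then fact (?u - 1) / 2 ^ card (snd PB) else 0 :: real) = 0"
        by simp
    qed
    have dz: "utc ?u = 0" using False unfolding utc_def by auto
    show ?thesis by (rule trans[OF sz dz[symmetric]])
  qed
  finally show ?thesis .
qed

lemma trancl_in_sq: "A \<subseteq> X \<times> X \<Longrightarrow> (x, y) \<in> A\<^sup>+ \<Longrightarrow> x \<in> X \<and> y \<in> X"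
  by (metis mem_Sigma_iff subsetD trancl_subset_Sigma)

lemma acyclic_split:
  assumes AX: "A \<subseteq> X \<times> X" and BY: "B \<subseteq> Y \<times> Y" and CYX: "C \<subseteq> Y \<times> X"
    and XY: "X \<inter> Y = {}" and acA: "acyclic A" and acB: "acyclic B"
  shows "acyclic (A \<union> B \<union> C)"
proof -
  let ?R = "A \<union> B \<union> C"
  have c1: "(x, y) \<in> A\<^sup>+" if "(x, y) \<in> ?R\<^sup>+" "x \<in> X" for x y
    using that
  proof (induction rule: trancl_induct)
    case (base y)
    then show ?case using BY CYX XY by auto
  next
    case (step y z)
    then have "(x, y) \<in> A\<^sup>+" by simp
    then have "y \<in> X" using trancl_in_sq[OF AX] by blast
    then have "(y, z) \<in> A" using step(2) BY CYX XY by auto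
    with \<open>(x, y) \<in> A\<^sup>+\<close> show ?case by (rule trancl_into_trancl)
  qed
  have c2: "(x, y) \<in> B\<^sup>+ \<or> y \<in> X" if "(x, y) \<in> ?R\<^sup>+" "x \<in> Y" for x y
    using that
  proof (induction rule: trancl_induct)
    case (base y)
    then show ?case using AX CYX XY by auto
  next
    case (step y z)
    show ?case
    proof (cases "y \<in> X")
      case True
      then have "(y, z) \<in> A" using step(2) BY CYX XY by auto
      then show ?thesis using AX by auto
    next
      case False
      then have yB: "(x, y) \<in> B\<^sup>+" using step by simp
      have "(y, z) \<in> B \<or> (y, z) \<in> C" using step(2) AX False by auto
      then show ?thesis
      proof
        assume "(y, z) \<in> B" then show ?thesis using yB by (meson trancl_into_trancl)
      next
        assume "(y, z) \<in> C" then show ?thesis using CYX by auto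
      qed
    qed
  qed
  show ?thesis unfolding acyclic_def
  proof
    fix x show "(x, x) \<notin> ?R\<^sup>+"
    proof
      assume xx: "(x, x) \<in> ?R\<^sup>+"
      have "?R \<subseteq> (X \<union> Y) \<times> (X \<union> Y)" using AX BY CYX by auto
      then have "x \<in> X \<union> Y" using trancl_in_sq[OF _ xx] by blast
      then show False
      proof
        assume "x \<in> X" then show False using c1[OF xx] acA unfolding acyclic_def by blast
      next
        assume xY: "x \<in> Y"
        then have "(x, x) \<in> B\<^sup>+ \<or> x \<in> X" using c2[OF xx] by blast
        then show False using acB XY xY unfolding acyclic_def by blast
      qed
    qed
  qed
qed

definition glue :: "'a set \<Rightarrow> 'a \<Rightarrow> 'a set \<Rightarrow> ('a \<times> 'a) set \<Rightarrow> ('a \<times> 'a) set \<Rightarrow> ('a \<times> 'a) set" where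
  "glue V r D ED EU = ED \<union> EU \<union> ({p \<in> V - D. outdeg EU p = 1} \<times> {r})"

definition NW :: "'a set \<Rightarrow> ('a \<times> 'a) set set" where
  "NW V = {E. E \<subseteq> V \<times> V \<and> tree_child_network V E \<and> card {v \<in> V. is_reticulation E v} = 1}"

lemma card2_other:
  assumes "finite A" "card A = 2" shows "\<exists>w\<in>A. w \<noteq> r"
proof (rule ccontr)
  assume "\<not> (\<exists>w\<in>A. w \<noteq> r)"
  then have "A \<subseteq> {r}" by auto
  then have "card A \<le> card {r}" by (intro card_mono) auto
  then show False using assms by simp
qed

lemma glue_good:
  assumes fV: "finite V" and rD: "r \<in> D" and DV: "D \<subseteq> V"
    and ED: "ED \<in> DT D r" and EU: "EU \<in> UT (V - D)"
  shows "glue V r D ED EU \<in> NW V"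
    and "{v \<in> V. is_reticulation (glue V r D ED EU) v} = {r}"
    and "{v. (r, v) \<in> (glue V r D ED EU)\<^sup>*} = D"
    and "ED = glue V r D ED EU \<inter> (D \<times> D)"
    and "EU = glue V r D ED EU \<inter> ((V - D) \<times> (V - D))"
proof -
  define U where "U = V - D"
  define E where "E = glue V r D ED EU"
  obtain B where B: "B \<subseteq> D - {r}" and TD: "tree D ED r" and odD: "\<forall>v\<in>D. outdeg ED v = pat {r} B v"
    using ED unfolding DT_def RT_def by blast
  obtain \<rho> P B' where \<rho>: "\<rho> \<in> U" and PB: "(P, B') \<in> PBs U" and TU: "tree U EU \<rho>"
    and odU: "\<forall>v\<in>U. outdeg EU v = pat P B' v"
    using EU unfolding UT_def RT_def U_def by force
  have PU: "P \<subseteq> U" and cP: "card P = 2" and B'U: "B' \<subseteq> U - P" using PB unfolding PBs_def by auto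
  have fD: "finite D" using DV fV by (rule finite_subset)
  have fU: "finite U" using fV unfolding U_def by simp
  have subD: "ED \<subseteq> D \<times> D" using TD by (rule tree_sub)
  have subU: "EU \<subseteq> U \<times> U" using TU by (rule tree_sub)
  have DU: "D \<inter> U = {}" unfolding U_def by auto
  have rU: "r \<notin> U" using rD unfolding U_def by auto
  have UV: "U \<subseteq> V" unfolding U_def by auto
  have Pset: "{p \<in> V - D. outdeg EU p = 1} = P"
  proof -
    have "p \<in> P \<longleftrightarrow> outdeg EU p = 1" if "p \<in> U" for p
      using odU that B'U unfolding pat_def by auto
    then show ?thesis using PU unfolding U_def by auto
  qed
  have Edef: "E = ED \<union> EU \<union> P \<times> {r}" unfolding E_def glue_def Pset ..
  have fP: "finite P" using PU fU by (rule finite_subset)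
  have EV: "E \<subseteq> V \<times> V" unfolding Edef using subD subU PU DV UV rD by blast
  have pU: "{u. (u, v) \<in> E} = {u. (u, v) \<in> EU}" if "v \<in> U" for v
    using that subD rU DU unfolding Edef by auto
  have sU: "{w. (v, w) \<in> E} = {w. (v, w) \<in> EU} \<union> (if v \<in> P then {r} else {})" if "v \<in> U" for v
    using that subD DU unfolding Edef by auto
  have pD: "{u. (u, v) \<in> E} = {u. (u, v) \<in> ED} \<union> (if v = r then P else {})" if "v \<in> D" for v
    using that subU DU unfolding Edef by auto
  have sD: "{w. (v, w) \<in> E} = {w. (v, w) \<in> ED}" if "v \<in> D" for v
    using that subU DU PU unfolding Edef by auto
  have pOut: "{u. (u, v) \<in> E} = {}" if "v \<notin> V" for v using that EV by auto
  have ind_U: "indeg E v = (if v = \<rho> then 0 else 1)" if "v \<in> U" for v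
    using pU[OF that] tree_root_indeg[OF TU] TU that unfolding indeg_def tree_def by auto
  have od_U: "outdeg E v = (if v \<in> P \<or> v \<in> B' then 2 else 0)" if v: "v \<in> U" for v
  proof -
    have "r \<notin> {w. (v, w) \<in> EU}" using subU rU by auto
    then have "outdeg E v = outdeg EU v + (if v \<in> P then 1 else 0)"
      unfolding outdeg_def sU[OF v] using finite_succ[OF fU subU, of v] by auto
    then show ?thesis using odU v B'U unfolding pat_def by auto
  qed
  have indr0: "{u. (u, r) \<in> ED} = {}" using tree_root_indeg[OF TD] finite_pred[OF fD subD, of r]
    unfolding indeg_def by simp
  have ind_D: "indeg E v = (if v = r then 2 else 1)" if v: "v \<in> D" for v
  proof (cases "v = r")
    case True
    then have "{u. (u, v) \<in> E} = P" using pD[OF v] indr0 by simp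
    then show ?thesis using cP True unfolding indeg_def by simp
  next
    case False
    then have "{u. (u, v) \<in> E} = {u. (u, v) \<in> ED}" using pD[OF v] by simp
    then show ?thesis using TD v False unfolding indeg_def tree_def by auto
  qed
  have od_D: "outdeg E v = pat {r} B v" if v: "v \<in> D" for v
    using sD[OF v] odD v unfolding outdeg_def by simp
  have ret_iff: "is_reticulation E v \<longleftrightarrow> v = r" if v: "v \<in> V" for v
  proof (cases "v \<in> D")
    case True
    then show ?thesis using ind_D od_D B unfolding is_reticulation_def pat_def by auto
  next
    case False
    then have "v \<in> U" using v unfolding U_def by simp
    then show ?thesis using ind_U False rD unfolding is_reticulation_def by auto
  qed
  show retset: "{v \<in> V. is_reticulation E v} = {r}" using ret_iff rD DV by auto
  have acE: "acyclic E" unfolding Edef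
  proof (rule acyclic_split[of ED D EU U "P \<times> {r}"])
    show "ED \<subseteq> D \<times> D" by (rule subD)
    show "EU \<subseteq> U \<times> U" by (rule subU)
    show "P \<times> {r} \<subseteq> U \<times> D" using PU rD by auto
    show "D \<inter> U = {}" by (rule DU)
    show "acyclic ED" using TD unfolding tree_def by simp
    show "acyclic EU" using TU unfolding tree_def by simp
  qed
  have EDsub: "ED\<^sup>* \<subseteq> E\<^sup>*" unfolding Edef by (rule rtrancl_mono) auto
  have EUsub: "EU\<^sup>* \<subseteq> E\<^sup>*" unfolding Edef by (rule rtrancl_mono) auto
  have u2: "card U \<ge> 2" using card_mono[OF fU PU] cP by simp
  have reachD: "(r, v) \<in> E\<^sup>*" if "v \<in> D" for v using TD that EDsub unfolding tree_def by auto
  have reach: "(\<rho>, v) \<in> E\<^sup>*" if v: "v \<in> V" for v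
  proof (cases "v \<in> U")
    case True then show ?thesis using TU EUsub unfolding tree_def by auto
  next
    case False
    then have vD: "v \<in> D" using v unfolding U_def by simp
    obtain p where p: "p \<in> P" using cP by (metis card.empty ex_in_conv zero_neq_numeral)
    have "(\<rho>, p) \<in> E\<^sup>*" using TU EUsub p PU unfolding tree_def by auto
    moreover have "(p, r) \<in> E" using p unfolding Edef by auto
    ultimately have "(\<rho>, r) \<in> E\<^sup>*" by (rule rtrancl_into_rtrancl)
    then show ?thesis using reachD[OF vD] by (rule rtrancl_trans)
  qed
  have od\<rho>: "outdeg E \<rho> = 2"
  proof -
    have "outdeg EU \<rho> \<ge> 1" using tree_root_outdeg[OF TU u2] .
    then have "\<rho> \<in> P \<or> \<rho> \<in> B'" using odU \<rho> unfolding pat_def by (auto split: if_splits)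
    then show ?thesis using od_U[OF \<rho>] by simp
  qed
  have \<rho>V: "\<rho> \<in> V" using \<rho> UV by auto
  have phylo: "phylo_network V E"
    unfolding phylo_network_def
  proof (intro conjI bexI[of _ \<rho>])
    show "finite V" by (rule fV)
    show "E \<subseteq> V \<times> V" by (rule EV)
    show "acyclic E" by (rule acE)
    show "\<rho> \<in> V" by (rule \<rho>V)
    show "\<forall>v\<in>V. (\<rho>, v) \<in> E\<^sup>*" using reach by blast
    show "indeg E \<rho> = 0" using ind_U[OF \<rho>] by simp
    show "outdeg E \<rho> = 2 \<or> V = {\<rho>}" using od\<rho> by simp
    show "\<forall>v\<in>V - {\<rho>}. indeg E v = 1 \<and> outdeg E v = 2 \<or> indeg E v = 2 \<and> outdeg E v = 1 \<or>
        indeg E v = 1 \<and> outdeg E v = 0"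
    proof
      fix v assume v: "v \<in> V - {\<rho>}"
      show "indeg E v = 1 \<and> outdeg E v = 2 \<or> indeg E v = 2 \<and> outdeg E v = 1 \<or>
        indeg E v = 1 \<and> outdeg E v = 0"
      proof (cases "v \<in> D")
        case True
        then show ?thesis using ind_D[OF True] od_D[OF True] B unfolding pat_def by auto
      next
        case False
        then have "v \<in> U" using v unfolding U_def by simp
        then show ?thesis using ind_U od_U v by auto
      qed
    qed
  qed
  have tc: "\<forall>v\<in>V. outdeg E v \<noteq> 0 \<longrightarrow> (\<exists>w. (v, w) \<in> E \<and> \<not> is_reticulation E w)"
  proof (intro ballI impI)
    fix v assume v: "v \<in> V" and nz: "outdeg E v \<noteq> 0"
    have fs: "finite {w. (v, w) \<in> E}" using finite_succ[OF fV EV] .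
    have "\<exists>w. (v, w) \<in> E \<and> w \<noteq> r"
    proof (cases "v = r")
      case True
      have "{w. (v, w) \<in> E} \<noteq> {}"
      proof
        assume "{w. (v, w) \<in> E} = {}"
        then have "outdeg E v = 0" unfolding outdeg_def by simp
        then show False using nz by simp
      qed
      then obtain w where w: "(v, w) \<in> E" by auto
      moreover have "w \<noteq> r" using w True acE unfolding acyclic_def by auto
      ultimately show ?thesis by blast
    next
      case False
      have "outdeg E v = 2"
      proof (cases "v \<in> D")
        case True
        then show ?thesis using od_D[OF True] nz False unfolding pat_def by (auto split: if_splits)
      next
        case f2: False
        then have "v \<in> U" using v unfolding U_def by simp
        then show ?thesis using od_U nz by (auto split: if_splits)
      qed
      then have "card {w. (v, w) \<in> E} = 2" unfolding outdeg_def .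
      then obtain w where "w \<in> {w. (v, w) \<in> E}" "w \<noteq> r" using card2_other[OF fs] by blast
      then show ?thesis by blast
    qed
    then obtain w where w: "(v, w) \<in> E" "w \<noteq> r" by blast
    then have "w \<in> V" using EV by auto
    then have "\<not> is_reticulation E w" using ret_iff w by simp
    then show "\<exists>w. (v, w) \<in> E \<and> \<not> is_reticulation E w" using w by blast
  qed
  show "E \<in> NW V" unfolding NW_def tree_child_network_def using EV phylo tc retset by simp
  show "{v. (r, v) \<in> E\<^sup>*} = D"
  proof
    show "D \<subseteq> {v. (r, v) \<in> E\<^sup>*}" using reachD by auto
    show "{v. (r, v) \<in> E\<^sup>*} \<subseteq> D"
    proof
      fix v assume "v \<in> {v. (r, v) \<in> E\<^sup>*}"
      then have "(r, v) \<in> E\<^sup>*" by simp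
      then show "v \<in> D"
      proof (induction rule: rtrancl_induct)
        case base then show ?case by (rule rD)
      next
        case (step w v)
        have "v \<in> {w'. (w, w') \<in> E}" using step(2) by simp
        then have "v \<in> {w'. (w, w') \<in> ED}" unfolding sD[OF step(3)] .
        then show ?case using subD by auto
      qed
    qed
  qed
  show "ED = E \<inter> (D \<times> D)" unfolding Edef using subD subU DU PU by blast
  show "EU = E \<inter> ((V - D) \<times> (V - D))" unfolding Edef U_def[symmetric] using subD subU DU rU by blast
qed

lemma decomp:
  assumes fV: "finite V" and EN: "E \<in> NW V"
  shows "\<exists>r D ED EU. r \<in> D \<and> D \<subseteq> V \<and> ED \<in> DT D r \<and> EU \<in> UT (V - D) \<and> E = glue V r D ED EU"
proof -
  have EV: "E \<subseteq> V \<times> V" and tcn: "tree_child_network V E"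
    and c1: "card {v \<in> V. is_reticulation E v} = 1" using EN unfolding NW_def by auto
  have ph: "phylo_network V E" using tcn unfolding tree_child_network_def by simp
  have acE: "acyclic E" using ph unfolding phylo_network_def by simp
  obtain \<rho> where \<rho>V: "\<rho> \<in> V" and reach: "\<forall>v\<in>V. (\<rho>, v) \<in> E\<^sup>*" and ind\<rho>: "indeg E \<rho> = 0"
    and od\<rho>': "outdeg E \<rho> = 2 \<or> V = {\<rho>}"
    and cats: "\<forall>v\<in>V - {\<rho>}. (indeg E v = 1 \<and> outdeg E v = 2) \<or> (indeg E v = 2 \<and> outdeg E v = 1) \<or>
            (indeg E v = 1 \<and> outdeg E v = 0)"
    using ph unfolding phylo_network_def by blast
  obtain r where rset: "{v \<in> V. is_reticulation E v} = {r}" using c1 by (rule card_1_singletonE)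
  have rV: "r \<in> V" and retr: "is_reticulation E r" using rset by auto
  have indr: "indeg E r = 2" and odr: "outdeg E r = 1" using retr unfolding is_reticulation_def by auto
  have r\<rho>: "r \<noteq> \<rho>" using indr ind\<rho> by auto
  have od\<rho>: "outdeg E \<rho> = 2" using od\<rho>' rV r\<rho> by auto
  have F1: "indeg E v = 1 \<and> (outdeg E v = 2 \<or> outdeg E v = 0)" if "v \<in> V" "v \<noteq> \<rho>" "v \<noteq> r" for v
  proof -
    have "\<not> is_reticulation E v" using rset that by auto
    then show ?thesis using cats that unfolding is_reticulation_def by auto
  qed
  have od02: "outdeg E v = 2 \<or> outdeg E v = 0" if "v \<in> V" "v \<noteq> r" for v
    using F1 that od\<rho> by (cases "v = \<rho>") auto
  define D where "D = {v. (r, v) \<in> E\<^sup>*}"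
  define U where "U = V - D"
  define P where "P = {u. (u, r) \<in> E}"
  have rD: "r \<in> D" unfolding D_def by simp
  have DV: "D \<subseteq> V"
  proof
    fix v assume "v \<in> D"
    then have "(r, v) \<in> E\<^sup>*" unfolding D_def by simp
    then show "v \<in> V"
    proof (cases rule: rtranclE)
      case base then show ?thesis using rV by simp
    next
      case (step y) then show ?thesis using EV by auto
    qed
  qed
  have \<rho>D: "\<rho> \<notin> D"
  proof
    assume "\<rho> \<in> D"
    then have a: "(r, \<rho>) \<in> E\<^sup>*" unfolding D_def by simp
    have "(\<rho>, r) \<in> E\<^sup>*" using reach rV by auto
    then have "(\<rho>, r) \<in> E\<^sup>+" using r\<rho> by (auto simp: rtrancl_eq_or_trancl)
    with a have "(r, r) \<in> E\<^sup>+" by (rule rtrancl_trancl_trancl)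
    then show False using acE unfolding acyclic_def by auto
  qed
  have \<rho>U: "\<rho> \<in> U" using \<rho>V \<rho>D unfolding U_def by simp
  have fD: "finite D" using DV fV by (rule finite_subset)
  have fU: "finite U" using fV unfolding U_def by simp
  have cP: "card P = 2" using indr unfolding indeg_def P_def .
  have PV: "P \<subseteq> V" using EV unfolding P_def by auto
  have PD: "P \<inter> D = {}"
  proof (rule ccontr)
    assume "P \<inter> D \<noteq> {}"
    then obtain p where p: "(p, r) \<in> E" "(r, p) \<in> E\<^sup>*" unfolding P_def D_def by auto
    then have "(r, r) \<in> E\<^sup>+" by (meson rtrancl_into_trancl1)
    then show False using acE unfolding acyclic_def by auto
  qed
  have PU: "P \<subseteq> U" using PV PD unfolding U_def by auto
  have F5: "w \<in> D" if "v \<in> D" "(v, w) \<in> E" for v w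
    using that unfolding D_def by (auto intro: rtrancl_into_rtrancl)
  have F4: "{u. (u, v) \<in> E} \<subseteq> D" if v: "v \<in> D" "v \<noteq> r" for v
  proof -
    have "(r, v) \<in> E\<^sup>*" using v unfolding D_def by simp
    then obtain w where w: "(r, w) \<in> E\<^sup>*" "(w, v) \<in> E" using v(2) by (auto elim: rtranclE)
    have "v \<noteq> \<rho>" using v \<rho>D by auto
    then have "indeg E v = 1" using F1 v DV by auto
    then obtain x where x: "{u. (u, v) \<in> E} = {x}" unfolding indeg_def by (rule card_1_singletonE)
    then have "x = w" using w(2) by auto
    then show ?thesis using x w(1) unfolding D_def by auto
  qed
  define ED where "ED = E \<inter> (D \<times> D)"
  define EU where "EU = E \<inter> (U \<times> U)"
  have into_D: "u \<in> D \<or> v = r" if "(u, v) \<in> E" "v \<in> D" for u v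
    using F4[OF that(2)] that(1) by blast
  have sEU: "{w. (p, w) \<in> EU} = {w. (p, w) \<in> E} - {r}" if p: "p \<in> U" for p
  proof -
    have "w \<in> U" if "(p, w) \<in> E" "w \<noteq> r" for w
    proof -
      have "w \<in> V" using that EV by auto
      moreover have "w \<notin> D" using into_D[of p w] that p unfolding U_def by auto
      ultimately show ?thesis unfolding U_def by simp
    qed
    then show ?thesis using p rD unfolding EU_def U_def by auto
  qed
  have odEU: "outdeg EU p = outdeg E p - (if p \<in> P then 1 else 0)" if p: "p \<in> U" for p
  proof -
    have "finite {w. (p, w) \<in> E}" using finite_succ[OF fV EV] .
    then show ?thesis unfolding outdeg_def sEU[OF p] P_def by (auto simp: card_Diff_singleton)
  qed
  have pr_ne: "p \<noteq> r" if "p \<in> U" for p using that rD unfolding U_def by auto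
  have odEU_P: "outdeg EU p = 1" if p: "p \<in> P" for p
  proof -
    have pU: "p \<in> U" using p PU by auto
    have "outdeg E p \<noteq> 0"
    proof
      assume "outdeg E p = 0"
      then have "{w. (p, w) \<in> E} = {}" using finite_succ[OF fV EV, of p] unfolding outdeg_def by simp
      then show False using p unfolding P_def by auto
    qed
    then have "outdeg E p = 2" using od02[of p] pU pr_ne[OF pU] unfolding U_def by auto
    then show ?thesis using odEU[OF pU] p by simp
  qed
  have odEU_nP: "outdeg EU p = outdeg E p \<and> (outdeg E p = 2 \<or> outdeg E p = 0)"
    if p: "p \<in> U" "p \<notin> P" for p
    using odEU[OF p(1)] p od02[of p] pr_ne[OF p(1)] unfolding U_def by auto
  have Pset: "{p \<in> V - D. outdeg EU p = 1} = P"
  proof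
    show "{p \<in> V - D. outdeg EU p = 1} \<subseteq> P"
    proof
      fix p assume "p \<in> {p \<in> V - D. outdeg EU p = 1}"
      then have "p \<in> U" "outdeg EU p = 1" unfolding U_def by auto
      then show "p \<in> P" using odEU_nP by fastforce
    qed
    show "P \<subseteq> {p \<in> V - D. outdeg EU p = 1}" using PU odEU_P unfolding U_def by auto
  qed
  have Eeq: "E = glue V r D ED EU"
  proof -
    have "E \<subseteq> ED \<union> EU \<union> P \<times> {r}"
    proof
      fix x assume x: "x \<in> E"
      obtain u v where uv: "x = (u, v)" by (cases x)
      have uvV: "u \<in> V" "v \<in> V" using x uv EV by auto
      show "x \<in> ED \<union> EU \<union> P \<times> {r}"
      proof (cases "u \<in> D")
        case True
        then have "v \<in> D" using F5 x uv by auto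
        then show ?thesis using True x uv unfolding ED_def by auto
      next
        case False
        then have uU: "u \<in> U" using uvV unfolding U_def by simp
        show ?thesis
        proof (cases "v \<in> D")
          case True
          then have "v = r" using into_D[of u v] x uv False by auto
          then show ?thesis using x uv unfolding P_def by auto
        next
          case vn: False
          then show ?thesis using uU uvV x uv unfolding EU_def U_def by auto
        qed
      qed
    qed
    moreover have "ED \<union> EU \<union> P \<times> {r} \<subseteq> E" unfolding ED_def EU_def P_def by auto
    ultimately have "E = ED \<union> EU \<union> P \<times> {r}" by (rule equalityI)
    then show ?thesis unfolding glue_def Pset .
  qed
  have reachD: "(r, v) \<in> ED\<^sup>*" if "(r, v) \<in> E\<^sup>*" for v
    using that
  proof (induction rule: rtrancl_induct)
    case base then show ?case by simp
  next
    case (step w v)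
    have "w \<in> D" using step(1) unfolding D_def by simp
    moreover have "v \<in> D" using step(1,2) unfolding D_def by (auto intro: rtrancl_into_rtrancl)
    ultimately have "(w, v) \<in> ED" using step(2) unfolding ED_def by simp
    with step(3) show ?case by (rule rtrancl_into_rtrancl)
  qed
  have TD: "tree D ED r"
    unfolding tree_def
  proof (intro conjI ballI)
    show "finite D" by (rule fD)
    show "ED \<subseteq> D \<times> D" unfolding ED_def by simp
    show "acyclic ED" using acE unfolding ED_def by (rule acyclic_subset) simp
    show "r \<in> D" by (rule rD)
  next
    fix v assume "v \<in> D" then show "(r, v) \<in> ED\<^sup>*" using reachD unfolding D_def by simp
  next
    fix v assume v: "v \<in> D - {r}"
    then have "{u. (u, v) \<in> ED} = {u. (u, v) \<in> E}" using F4[of v] unfolding ED_def by auto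
    moreover have "v \<noteq> \<rho>" using v \<rho>D by auto
    ultimately show "indeg ED v = 1" using F1[of v] v DV unfolding indeg_def by auto
  qed
  have sED: "{w. (v, w) \<in> ED} = {w. (v, w) \<in> E}" if "v \<in> D" for v
    using that F5 unfolding ED_def by auto
  define B where "B = {v \<in> D - {r}. outdeg ED v = 2}"
  have EDin: "ED \<in> DT D r"
  proof -
    have "\<forall>v\<in>D. outdeg ED v = pat {r} B v"
    proof
      fix v assume v: "v \<in> D"
      have oe: "outdeg ED v = outdeg E v" using sED[OF v] unfolding outdeg_def by simp
      show "outdeg ED v = pat {r} B v"
      proof (cases "v = r")
        case True then show ?thesis using oe odr unfolding pat_def by simp
      next
        case False
        then have "outdeg E v = 2 \<or> outdeg E v = 0" using od02[of v] v DV by auto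
        then show ?thesis using oe v False unfolding pat_def B_def by auto
      qed
    qed
    moreover have "B \<in> Pow (D - {r})" unfolding B_def by auto
    ultimately show ?thesis unfolding DT_def RT_def using TD by blast
  qed
  have reachU: "v \<in> U \<longrightarrow> (\<rho>, v) \<in> EU\<^sup>*" if "(\<rho>, v) \<in> E\<^sup>*" for v
    using that
  proof (induction rule: rtrancl_induct)
    case base then show ?case by simp
  next
    case (step w v)
    show ?case
    proof
      assume vU: "v \<in> U"
      have "w \<in> V" using step(2) EV by auto
      moreover have "w \<notin> D" using F5[of w v] step(2) vU unfolding U_def by auto
      ultimately have wU: "w \<in> U" unfolding U_def by simp
      then have "(\<rho>, w) \<in> EU\<^sup>*" using step(3) by simp
      moreover have "(w, v) \<in> EU" using wU vU step(2) unfolding EU_def by simp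
      ultimately show "(\<rho>, v) \<in> EU\<^sup>*" by (rule rtrancl_into_rtrancl)
    qed
  qed
  have TU: "tree U EU \<rho>"
    unfolding tree_def
  proof (intro conjI ballI)
    show "finite U" by (rule fU)
    show "EU \<subseteq> U \<times> U" unfolding EU_def by simp
    show "acyclic EU" using acE unfolding EU_def by (rule acyclic_subset) simp
    show "\<rho> \<in> U" by (rule \<rho>U)
  next
    fix v assume v: "v \<in> U"
    then show "(\<rho>, v) \<in> EU\<^sup>*" using reachU reach unfolding U_def by auto
  next
    fix v assume v: "v \<in> U - {\<rho>}"
    have "{u. (u, v) \<in> EU} = {u. (u, v) \<in> E}"
    proof -
      have "u \<in> U" if "(u, v) \<in> E" for u
      proof -
        have "u \<in> V" using that EV by auto
        moreover have "u \<notin> D" using F5[of u v] that v unfolding U_def by auto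
        ultimately show ?thesis unfolding U_def by simp
      qed
      then show ?thesis using v unfolding EU_def by auto
    qed
    moreover have "v \<noteq> r" using v pr_ne by auto
    ultimately show "indeg EU v = 1" using F1[of v] v unfolding indeg_def U_def by auto
  qed
  define B' where "B' = {v \<in> U. outdeg EU v = 2}"
  have EUin: "EU \<in> UT U"
  proof -
    have PBin: "(P, B') \<in> PBs U" unfolding PBs_def B'_def using PU cP odEU_P by auto
    have "\<forall>v\<in>U. outdeg EU v = pat P B' v"
    proof
      fix v assume v: "v \<in> U"
      show "outdeg EU v = pat P B' v"
      proof (cases "v \<in> P")
        case True then show ?thesis using odEU_P unfolding pat_def by simp
      next
        case False
        then show ?thesis using odEU_nP[OF v False] v unfolding pat_def B'_def by auto
      qed
    qed
    then have "EU \<in> RT U \<rho> (pat (fst (P, B')) (snd (P, B')))" unfolding RT_def using TU by simp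
    then show ?thesis unfolding UT_def using PBin \<rho>U by blast
  qed
  show ?thesis using rD DV EDin EUin Eeq unfolding U_def by blast
qed

definition Params :: "'a set \<Rightarrow> ('a \<times> 'a set \<times> ('a \<times> 'a) set \<times> ('a \<times> 'a) set) set" where
  "Params V = Sigma V (\<lambda>r. Sigma {D. r \<in> D \<and> D \<subseteq> V} (\<lambda>D. DT D r \<times> UT (V - D)))"

definition gl :: "'a set \<Rightarrow> 'a \<times> 'a set \<times> ('a \<times> 'a) set \<times> ('a \<times> 'a) set \<Rightarrow> ('a \<times> 'a) set" where
  "gl V x = glue V (fst x) (fst (snd x)) (fst (snd (snd x))) (snd (snd (snd x)))"

lemma DT_finite: "finite D \<Longrightarrow> finite (DT D r)"
proof -
  assume fD: "finite D"
  have "DT D r \<subseteq> Pow (D \<times> D)"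
  proof
    fix E assume "E \<in> DT D r"
    then have "tree D E r" unfolding DT_def RT_def by blast
    then show "E \<in> Pow (D \<times> D)" using tree_sub[of D E r] by simp
  qed
  moreover have "finite (Pow (D \<times> D))" using fD by simp
  ultimately show ?thesis by (rule finite_subset)
qed

lemma UT_finite: "finite U \<Longrightarrow> finite (UT U)"
proof -
  assume fU: "finite U"
  have "UT U \<subseteq> Pow (U \<times> U)"
  proof
    fix E assume "E \<in> UT U"
    then obtain \<rho> where "tree U E \<rho>" unfolding UT_def RT_def by blast
    then show "E \<in> Pow (U \<times> U)" using tree_sub[of U E \<rho>] by simp
  qed
  moreover have "finite (Pow (U \<times> U))" using fU by simp
  ultimately show ?thesis by (rule finite_subset)
qed

lemma NW_card:
  assumes fV: "finite V"
  shows "card (NW V) = (\<Sum>r\<in>V. \<Sum>D\<in>{D. r \<in> D \<and> D \<subseteq> V}. card (DT D r) * card (UT (V - D)))"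
proof -
  have inj: "inj_on (gl V) (Params V)"
  proof (rule inj_onI)
    fix x y assume x: "x \<in> Params V" and y: "y \<in> Params V" and eq: "gl V x = gl V y"
    obtain r D ED EU where xx: "x = (r, D, ED, EU)" by (cases x) auto
    obtain r' D' ED' EU' where yy: "y = (r', D', ED', EU')" by (cases y) auto
    have px: "r \<in> D" "D \<subseteq> V" "ED \<in> DT D r" "EU \<in> UT (V - D)" using x unfolding xx Params_def by auto
    have py: "r' \<in> D'" "D' \<subseteq> V" "ED' \<in> DT D' r'" "EU' \<in> UT (V - D')" using y unfolding yy Params_def by auto
    have eq': "glue V r D ED EU = glue V r' D' ED' EU'" using eq unfolding xx yy gl_def by simp
    note gx = glue_good[OF fV px] and gy = glue_good[OF fV py]
    have "{r} = {r'}" using gx(2) gy(2) eq' by simp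
    then have rr: "r = r'" by simp
    have DD: "D = D'" using gx(3) gy(3) eq' rr by simp
    have "ED = glue V r D ED EU \<inter> (D \<times> D)" by (rule gx(4))
    also have "\<dots> = glue V r' D' ED' EU' \<inter> (D' \<times> D')" using eq' DD by simp
    also have "\<dots> = ED'" by (rule gy(4)[symmetric])
    finally have "ED = ED'" .
    moreover have "EU = EU'"
    proof -
      have "EU = glue V r D ED EU \<inter> ((V - D) \<times> (V - D))" by (rule gx(5))
      also have "\<dots> = glue V r' D' ED' EU' \<inter> ((V - D') \<times> (V - D'))" using eq' DD by simp
      also have "\<dots> = EU'" by (rule gy(5)[symmetric])
      finally show ?thesis .
    qed
    ultimately show "x = y" unfolding xx yy using rr DD by simp
  qed
  have img: "gl V ` Params V = NW V"
  proof
    show "gl V ` Params V \<subseteq> NW V"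
    proof
      fix E assume "E \<in> gl V ` Params V"
      then obtain x where x: "x \<in> Params V" "E = gl V x" by blast
      obtain r D ED EU where xx: "x = (r, D, ED, EU)" by (cases x) auto
      have px: "r \<in> D" "D \<subseteq> V" "ED \<in> DT D r" "EU \<in> UT (V - D)" using x unfolding xx Params_def by auto
      show "E \<in> NW V" using glue_good(1)[OF fV px] x(2) unfolding xx gl_def by simp
    qed
    show "NW V \<subseteq> gl V ` Params V"
    proof
      fix E assume EN: "E \<in> NW V"
      have "\<exists>r D ED EU. r \<in> D \<and> D \<subseteq> V \<and> ED \<in> DT D r \<and> EU \<in> UT (V - D) \<and> E = glue V r D ED EU"
        by (rule decomp[OF fV EN])
      then show "E \<in> gl V ` Params V"
      proof (elim exE conjE)
        fix r D ED EU assume p: "r \<in> D" "D \<subseteq> V" "ED \<in> DT D r" "EU \<in> UT (V - D)"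
          and E: "E = glue V r D ED EU"
        have "(r, D, ED, EU) \<in> Params V" using p unfolding Params_def by auto
        moreover have "E = gl V (r, D, ED, EU)" using E unfolding gl_def by simp
        ultimately show "E \<in> gl V ` Params V" by (rule rev_image_eqI)
      qed
    qed
  qed
  have "card (NW V) = card (Params V)" using card_image[OF inj] img by simp
  also have "card (Params V) = (\<Sum>r\<in>V. card (Sigma {D. r \<in> D \<and> D \<subseteq> V} (\<lambda>D. DT D r \<times> UT (V - D))))"
    unfolding Params_def
  proof (rule card_SigmaI[OF fV], rule ballI)
    fix r assume "r \<in> V"
    have fA: "finite {D. r \<in> D \<and> D \<subseteq> V}" using fV by simp
    show "finite (Sigma {D. r \<in> D \<and> D \<subseteq> V} (\<lambda>D. DT D r \<times> UT (V - D)))"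
    proof (rule finite_SigmaI[OF fA])
      fix D assume "D \<in> {D. r \<in> D \<and> D \<subseteq> V}"
      then have "finite D" using fV by (auto intro: finite_subset)
      then show "finite (DT D r \<times> UT (V - D))" using DT_finite[of D r] UT_finite[of "V - D"] fV by simp
    qed
  qed
  also have "\<dots> = (\<Sum>r\<in>V. \<Sum>D\<in>{D. r \<in> D \<and> D \<subseteq> V}. card (DT D r) * card (UT (V - D)))"
  proof (rule sum.cong[OF refl])
    fix r assume "r \<in> V"
    have fA: "finite {D. r \<in> D \<and> D \<subseteq> V}" using fV by simp
    have "card (Sigma {D. r \<in> D \<and> D \<subseteq> V} (\<lambda>D. DT D r \<times> UT (V - D))) =
        (\<Sum>D\<in>{D. r \<in> D \<and> D \<subseteq> V}. card (DT D r \<times> UT (V - D)))"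
    proof (rule card_SigmaI[OF fA], rule ballI)
      fix D assume "D \<in> {D. r \<in> D \<and> D \<subseteq> V}"
      then have "finite D" using fV by (auto intro: finite_subset)
      then show "finite (DT D r \<times> UT (V - D))" using DT_finite[of D r] UT_finite[of "V - D"] fV by simp
    qed
    then show "card (Sigma {D. r \<in> D \<and> D \<subseteq> V} (\<lambda>D. DT D r \<times> UT (V - D))) =
        (\<Sum>D\<in>{D. r \<in> D \<and> D \<subseteq> V}. card (DT D r) * card (UT (V - D)))"
      by (simp add: card_cartesian_product)
  qed
  finally show ?thesis .
qed

lemma sum_Pow_card:
  fixes h :: "nat \<Rightarrow> real"
  assumes fA: "finite A"
  shows "(\<Sum>B\<in>Pow A. h (card B)) = (\<Sum>k\<le>card A. real (card A choose k) * h k)"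
proof -
  have "(\<Sum>B\<in>Pow A. h (card B)) = (\<Sum>k\<in>{..card A}. \<Sum>B\<in>{B. B \<in> Pow A \<and> card B = k}. h (card B))"
  proof (rule sum.group[symmetric])
    show "finite (Pow A)" using fA by simp
    show "finite {..card A}" by simp
    show "card ` Pow A \<subseteq> {..card A}" using fA by (auto intro: card_mono)
  qed
  also have "\<dots> = (\<Sum>k\<le>card A. real (card A choose k) * h k)"
  proof (rule sum.cong[OF refl])
    fix k assume "k \<in> {..card A}"
    have "(\<Sum>B\<in>{B. B \<in> Pow A \<and> card B = k}. h (card B)) = (\<Sum>B\<in>{B. B \<subseteq> A \<and> card B = k}. h k)"
      by (intro sum.cong) auto
    also have "\<dots> = real (card {B. B \<subseteq> A \<and> card B = k}) * h k" by simp
    also have "card {B. B \<subseteq> A \<and> card B = k} = card A choose k" by (rule card_subsets_k[OF fA])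
    finally show "(\<Sum>B\<in>{B. B \<in> Pow A \<and> card B = k}. h (card B)) = real (card A choose k) * h k" .
  qed
  finally show ?thesis .
qed

lemma sum_containing:
  fixes g :: "nat \<Rightarrow> real"
  assumes fV: "finite V" and r: "r \<in> V"
  shows "(\<Sum>D\<in>{D. r \<in> D \<and> D \<subseteq> V}. g (card D)) =
    (\<Sum>k\<le>card V - 1. real ((card V - 1) choose k) * g (Suc k))"
proof -
  have inj: "inj_on (insert r) (Pow (V - {r}))"
  proof (rule inj_onI)
    fix A B assume "A \<in> Pow (V - {r})" "B \<in> Pow (V - {r})" "insert r A = insert r B"
    then show "A = B" by (metis Diff_insert_absorb PowD insert_absorb subset_Diff_insert)
  qed
  have img: "insert r ` Pow (V - {r}) = {D. r \<in> D \<and> D \<subseteq> V}"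
  proof
    show "insert r ` Pow (V - {r}) \<subseteq> {D. r \<in> D \<and> D \<subseteq> V}" using r by auto
    show "{D. r \<in> D \<and> D \<subseteq> V} \<subseteq> insert r ` Pow (V - {r})"
    proof
      fix D assume "D \<in> {D. r \<in> D \<and> D \<subseteq> V}"
      then have "D = insert r (D - {r})" "D - {r} \<in> Pow (V - {r})" by auto
      then show "D \<in> insert r ` Pow (V - {r})" by blast
    qed
  qed
  have "(\<Sum>D\<in>{D. r \<in> D \<and> D \<subseteq> V}. g (card D)) = (\<Sum>D'\<in>Pow (V - {r}). g (card (insert r D')))"
    unfolding img[symmetric] by (rule sum.reindex[OF inj, unfolded comp_def])
  also have "\<dots> = (\<Sum>D'\<in>Pow (V - {r}). g (Suc (card D')))"
  proof (rule sum.cong[OF refl])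
    fix D' assume "D' \<in> Pow (V - {r})"
    then have "finite D'" "r \<notin> D'" using fV by (auto intro: finite_subset)
    then show "g (card (insert r D')) = g (Suc (card D'))" by simp
  qed
  also have "\<dots> = (\<Sum>k\<le>card (V - {r}). real (card (V - {r}) choose k) * g (Suc k))"
    using sum_Pow_card[of "V - {r}" "\<lambda>k. g (Suc k)"] fV by simp
  also have "card (V - {r}) = card V - 1" using fV r by simp
  finally show ?thesis .
qed

lemma T1_formula:
  "real (T1 n) = real n * (\<Sum>k\<le>n - 1. real ((n - 1) choose k) * (dtc (Suc k) * utc (n - Suc k)))"
proof -
  let ?V = "{1..n}"
  have fV: "finite ?V" by simp
  have cV: "card ?V = n" by simp
  have "T1 n = card (NW ?V)" unfolding T1_def NW_def by simp
  also have "\<dots> = (\<Sum>r\<in>?V. \<Sum>D\<in>{D. r \<in> D \<and> D \<subseteq> ?V}. card (DT D r) * card (UT (?V - D)))"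
    by (rule NW_card[OF fV])
  finally have "real (T1 n) = (\<Sum>r\<in>?V. \<Sum>D\<in>{D. r \<in> D \<and> D \<subseteq> ?V}. real (card (DT D r)) * real (card (UT (?V - D))))"
    by simp
  also have "\<dots> = (\<Sum>r\<in>?V. \<Sum>D\<in>{D. r \<in> D \<and> D \<subseteq> ?V}. dtc (card D) * utc (n - card D))"
  proof (intro sum.cong refl)
    fix r D assume r: "r \<in> ?V" and D: "D \<in> {D. r \<in> D \<and> D \<subseteq> ?V}"
    have fD: "finite D" using D by (auto intro: finite_subset)
    have "real (card (DT D r)) = dtc (card D)" using DT_card[OF fD] D by simp
    moreover have "real (card (UT (?V - D))) = utc (card (?V - D))" by (rule UT_card) simp
    moreover have "card (?V - D) = n - card D" using D fD by (simp add: card_Diff_subset)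
    ultimately show "real (card (DT D r)) * real (card (UT (?V - D))) = dtc (card D) * utc (n - card D)"
      by simp
  qed
  also have "\<dots> = (\<Sum>r\<in>?V. \<Sum>k\<le>n - 1. real ((n - 1) choose k) * (dtc (Suc k) * utc (n - Suc k)))"
  proof (rule sum.cong[OF refl])
    fix r assume r: "r \<in> ?V"
    show "(\<Sum>D\<in>{D. r \<in> D \<and> D \<subseteq> ?V}. dtc (card D) * utc (n - card D)) =
        (\<Sum>k\<le>n - 1. real ((n - 1) choose k) * (dtc (Suc k) * utc (n - Suc k)))"
      using sum_containing[OF fV r, of "\<lambda>m. dtc m * utc (n - m)"] cV by simp
  qed
  also have "\<dots> = real n * (\<Sum>k\<le>n - 1. real ((n - 1) choose k) * (dtc (Suc k) * utc (n - Suc k)))"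
    by simp
  finally show ?thesis .
qed

lemma gchoose_step:
  fixes a :: real
  shows "a gchoose (Suc k) = (a - real k) / real (Suc k) * (a gchoose k)"
proof -
  have "a * (a gchoose k) = real k * (a gchoose k) + real (Suc k) * (a gchoose (Suc k))"
    by (rule gbinomial_mult_1)
  then have "real (Suc k) * (a gchoose (Suc k)) = (a - real k) * (a gchoose k)"
    by (simp add: algebra_simps)
  then show ?thesis by (simp add: field_simps del: of_nat_Suc)
qed

definition kap :: "nat \<Rightarrow> real" where
  "kap n = fact (2 * n) / (fact n * fact (Suc n) * 2 ^ n)"

definition hh :: "nat \<Rightarrow> real" where
  "hh n = fact (2 * n + 1) / (fact n * fact n * 2 ^ n)"

lemma aux_kap:
  fixes G P x :: real assumes "x \<ge> 0"
  shows "- ((1/2 - (x + 1)) / (x + 2) * G * ((-2) * P)) = - (G * P) * ((2 * x + 1) / (x + 2))"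
proof -
  have "x + 2 \<noteq> 0" using assms by simp
  then show ?thesis by (simp add: field_simps)
qed

lemma aux_hh:
  fixes G P x :: real assumes "x \<ge> 0"
  shows "(-3/2 - x) / (x + 1) * G * ((-2) * P) = (G * P) * ((2 * x + 3) / (x + 1))"
proof -
  have "x + 1 \<noteq> 0" using assms by simp
  then show ?thesis by (simp add: field_simps)
qed

lemma kap_alg:
  fixes F A y z u P :: real
  assumes "F \<noteq> 0" "A \<noteq> 0" "y \<noteq> 0" "z \<noteq> 0" "P \<noteq> 0"
  shows "F / (A * (y * A) * P) * (u / z) = (2 * y) * u * F / ((y * A) * (z * (y * A)) * (2 * P))"
  using assms by (simp add: field_simps)

lemma hh_alg:
  fixes G A y w P :: real
  assumes "G \<noteq> 0" "A \<noteq> 0" "y \<noteq> 0" "P \<noteq> 0"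
  shows "G / (A * A * P) * (w / y) = w * (2 * y) * G / ((y * A) * (y * A) * (2 * P))"
  using assms by (simp add: field_simps)

lemma kap_gchoose: "- (((1/2::real) gchoose (Suc n)) * (-2) ^ Suc n) = kap n"
proof (induction n)
  case 0
  then show ?case unfolding kap_def by simp
next
  case (Suc n)
  have e: "(1/2::real) gchoose (Suc (Suc n)) = (1/2 - (real n + 1)) / (real n + 2) * ((1/2) gchoose (Suc n))"
    using gchoose_step[of "1/2" "Suc n"] by (simp add: add.commute)
  have p: "(-2::real) ^ Suc (Suc n) = (-2) * (-2) ^ Suc n" by simp
  have "- (((1/2::real) gchoose (Suc (Suc n))) * (-2) ^ Suc (Suc n)) =
      - ((1/2 - (real n + 1)) / (real n + 2) * ((1/2) gchoose (Suc n)) * ((-2) * (-2) ^ Suc n))"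
    by (simp only: e p)
  also have "\<dots> = (- (((1/2::real) gchoose (Suc n)) * (-2) ^ Suc n)) * ((2 * real n + 1) / (real n + 2))"
    by (rule aux_kap) simp
  also have "\<dots> = kap n * ((2 * real n + 1) / (real n + 2))" using Suc by simp
  also have "\<dots> = kap (Suc n)"
  proof -
    have f1: "fact (2 * Suc n) = (2 * (real n + 1)) * (2 * real n + 1) * (fact (2 * n) :: real)"
    proof -
      have "2 * Suc n = Suc (Suc (2 * n))" by simp
      then show ?thesis by (simp add: fact_Suc algebra_simps)
    qed
    have f2: "fact (Suc (Suc n)) = (real n + 2) * (fact (Suc n) :: real)" by (simp add: fact_Suc algebra_simps)
    have f3: "fact (Suc n) = (real n + 1) * (fact n :: real)" by (simp add: fact_Suc algebra_simps)
    have "kap n * ((2 * real n + 1) / (real n + 2)) =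
        fact (2 * n) / (fact n * ((real n + 1) * fact n) * 2 ^ n) * ((2 * real n + 1) / (real n + 2))"
      unfolding kap_def f3 ..
    also have "\<dots> = (2 * (real n + 1)) * (2 * real n + 1) * fact (2 * n) /
        (((real n + 1) * fact n) * ((real n + 2) * ((real n + 1) * fact n)) * (2 * 2 ^ n))"
      by (rule kap_alg) auto
    also have "\<dots> = kap (Suc n)" unfolding kap_def f1 f2 f3 by simp
    finally show ?thesis .
  qed
  finally show ?case .
qed

lemma hh_gchoose: "((-3/2::real) gchoose n) * (-2) ^ n = hh n"
proof (induction n)
  case 0
  then show ?case unfolding hh_def by simp
next
  case (Suc n)
  have e: "(-3/2::real) gchoose (Suc n) = (-3/2 - real n) / (real n + 1) * ((-3/2) gchoose n)"
    using gchoose_step[of "-3/2" n] by (simp add: add.commute)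
  have p: "(-2::real) ^ Suc n = (-2) * (-2) ^ n" by simp
  have "((-3/2::real) gchoose (Suc n)) * (-2) ^ Suc n =
      (-3/2 - real n) / (real n + 1) * ((-3/2) gchoose n) * ((-2) * (-2) ^ n)"
    by (simp only: e p)
  also have "\<dots> = (((-3/2::real) gchoose n) * (-2) ^ n) * ((2 * real n + 3) / (real n + 1))"
    by (rule aux_hh) simp
  also have "\<dots> = hh n * ((2 * real n + 3) / (real n + 1))" using Suc by simp
  also have "\<dots> = hh (Suc n)"
  proof -
    have f1: "fact (2 * Suc n + 1) = (2 * real n + 3) * (2 * (real n + 1)) * (fact (2 * n + 1) :: real)"
    proof -
      have "2 * Suc n + 1 = Suc (Suc (2 * n + 1))" by simp
      then show ?thesis by (simp add: fact_Suc algebra_simps)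
    qed
    have f3: "fact (Suc n) = (real n + 1) * (fact n :: real)" by (simp add: fact_Suc algebra_simps)
    have "hh n * ((2 * real n + 3) / (real n + 1)) =
        fact (2 * n + 1) / (fact n * fact n * 2 ^ n) * ((2 * real n + 3) / (real n + 1))"
      unfolding hh_def ..
    also have "\<dots> = (2 * real n + 3) * (2 * (real n + 1)) * fact (2 * n + 1) /
        (((real n + 1) * fact n) * ((real n + 1) * fact n) * (2 * 2 ^ n))"
      by (rule hh_alg) auto
    also have "\<dots> = hh (Suc n)" unfolding hh_def f1 f3 by simp
    finally show ?thesis .
  qed
  finally show ?case .
qed

lemma aux_frac1:
  fixes F A B C D :: real
  assumes "F \<noteq> 0" "A \<noteq> 0" "B \<noteq> 0" "D \<noteq> 0"
  shows "(F / (A * B)) * C / D / F = C / (A * B * D)"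
  using assms by (simp add: field_simps)

lemma dtc_coeff: "dtc (2 * n + 2) / fact (2 * n + 1) = kap n"
proof -
  have d: "dtc (2 * n + 2) = real ((2 * n + 1) choose n) * fact (2 * n) / 2 ^ n"
    unfolding dtc_def by simp
  have c: "real ((2 * n + 1) choose n) = fact (2 * n + 1) / (fact n * fact (Suc n))"
  proof -
    have "real ((2 * n + 1) choose n) = fact (2 * n + 1) / (fact n * fact (2 * n + 1 - n))"
      by (rule binomial_fact) simp
    moreover have "2 * n + 1 - n = Suc n" by simp
    ultimately show ?thesis by simp
  qed
  have "dtc (2 * n + 2) / fact (2 * n + 1) =
      (fact (2 * n + 1) / (fact n * fact (Suc n))) * fact (2 * n) / 2 ^ n / fact (2 * n + 1)"
    by (simp only: d c)
  also have "\<dots> = fact (2 * n) / (fact n * fact (Suc n) * 2 ^ n)"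
    by (rule aux_frac1) auto
  finally show ?thesis unfolding kap_def .
qed

lemma aux_frac2:
  fixes F3 F1 A y P :: real
  assumes "F3 \<noteq> 0" "F1 \<noteq> 0" "A \<noteq> 0" "y \<noteq> 0" "P \<noteq> 0"
  shows "(F3 / (2 * F1)) * (F1 / (A * (y * A))) * ((2 * y) * F1) / P / F3 = F1 / (A * A * P)"
  using assms by (simp add: field_simps)

lemma utc_coeff: "utc (2 * n + 3) / fact (2 * n + 3) = hh n"
proof -
  have d: "utc (2 * n + 3) = real ((2 * n + 3) choose 2) * real ((2 * n + 1) choose n) * fact (2 * n + 2) / 2 ^ n"
    unfolding utc_def by simp
  have c: "real ((2 * n + 1) choose n) = fact (2 * n + 1) / (fact n * ((real n + 1) * fact n))"
  proof -
    have "real ((2 * n + 1) choose n) = fact (2 * n + 1) / (fact n * fact (2 * n + 1 - n))"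
      by (rule binomial_fact) simp
    moreover have "2 * n + 1 - n = Suc n" by simp
    moreover have "fact (Suc n) = (real n + 1) * (fact n :: real)" by (simp add: fact_Suc algebra_simps)
    ultimately show ?thesis by simp
  qed
  have c2: "real ((2 * n + 3) choose 2) = fact (2 * n + 3) / (2 * fact (2 * n + 1))"
  proof -
    have "real ((2 * n + 3) choose 2) = fact (2 * n + 3) / (fact 2 * fact (2 * n + 3 - 2))"
      by (rule binomial_fact) simp
    moreover have "2 * n + 3 - 2 = 2 * n + 1" by simp
    ultimately show ?thesis by simp
  qed
  have f: "fact (2 * n + 2) = (2 * (real n + 1)) * (fact (2 * n + 1) :: real)"
  proof -
    have "2 * n + 2 = Suc (2 * n + 1)" by simp
    then show ?thesis by (simp add: fact_Suc algebra_simps)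
  qed
  have "utc (2 * n + 3) / fact (2 * n + 3) =
      (fact (2 * n + 3) / (2 * fact (2 * n + 1))) * (fact (2 * n + 1) / (fact n * ((real n + 1) * fact n))) *
      ((2 * (real n + 1)) * fact (2 * n + 1)) / 2 ^ n / fact (2 * n + 3)"
    by (simp only: d c c2 f)
  also have "\<dots> = fact (2 * n + 1) / (fact n * fact n * 2 ^ n)"
    by (rule aux_frac2) auto
  finally show ?thesis unfolding hh_def .
qed

definition aa :: "real \<Rightarrow> nat \<Rightarrow> real" where
  "aa z m = (if m = 0 then 0 else dtc m * z ^ m / fact (m - 1))"

definition bb :: "real \<Rightarrow> nat \<Rightarrow> real" where
  "bb z j = utc j * z ^ j / fact j"

lemma dtc_nonneg: "dtc m \<ge> 0" unfolding dtc_def by auto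
lemma utc_nonneg: "utc m \<ge> 0" unfolding utc_def by auto

lemma xpow: "(- 2 * z\<^sup>2) ^ n = (-2) ^ n * (z::real) ^ (2 * n)"
proof -
  have "(- 2 * z\<^sup>2) ^ n = (-2) ^ n * (z\<^sup>2) ^ n" by (rule power_mult_distrib)
  also have "(z\<^sup>2) ^ n = z ^ (2 * n)" by (rule power_mult[symmetric])
  finally show ?thesis .
qed

lemma aux_T:
  fixes M F K L d u p q :: real
  assumes "M \<noteq> 0" "F \<noteq> 0" "K \<noteq> 0" "L \<noteq> 0"
  shows "M * (F / (K * L) * (d * u)) * (p * q) / (M * F) = (d * p / K) * (u * q / L)"
  using assms by (simp add: field_simps)

lemma A_sums:
  fixes z :: real assumes z: "2 * z\<^sup>2 < 1"
  shows "aa z sums (1 - sqrt (1 - 2 * z\<^sup>2))"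
proof -
  let ?x = "- 2 * z\<^sup>2"
  have ax: "\<bar>?x\<bar> < 1" using z by simp
  have s0: "(\<lambda>n. ((1/2) gchoose n) * ?x ^ n) sums sqrt (1 + ?x)" by (rule sqrt_series[OF ax])
  have "(\<lambda>n. ((1/2) gchoose (Suc n)) * ?x ^ (Suc n)) sums (sqrt (1 + ?x) - 1)"
    using s0 sums_Suc_iff[of "\<lambda>n. ((1/2) gchoose n) * ?x ^ n" "sqrt (1 + ?x) - 1"] by simp
  then have s1: "(\<lambda>n. - (((1/2) gchoose (Suc n)) * ?x ^ (Suc n))) sums (1 - sqrt (1 + ?x))"
    using sums_minus by fastforce
  have eq: "- (((1/2) gchoose (Suc n)) * ?x ^ (Suc n)) = aa z (2 * n + 2)" for n
  proof -
    have "?x ^ Suc n = (-2) ^ Suc n * z ^ (2 * Suc n)"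
      by (rule xpow)
    then have "?x ^ Suc n = (-2) ^ Suc n * z ^ (2 * n + 2)" by simp
    then have "- (((1/2) gchoose (Suc n)) * ?x ^ (Suc n)) = - (((1/2::real) gchoose (Suc n)) * (-2) ^ Suc n) * z ^ (2 * n + 2)"
      by simp
    also have "\<dots> = kap n * z ^ (2 * n + 2)" by (simp only: kap_gchoose)
    also have "\<dots> = dtc (2 * n + 2) / fact (2 * n + 1) * z ^ (2 * n + 2)" by (simp only: dtc_coeff)
    also have "\<dots> = aa z (2 * n + 2)" unfolding aa_def by simp
    finally show ?thesis .
  qed
  have "(\<lambda>n. aa z (2 * n + 2)) sums (1 - sqrt (1 - 2 * z\<^sup>2))"
    using s1 unfolding eq by simp
  moreover have "strict_mono (\<lambda>n::nat. 2 * n + 2)" by (rule strict_monoI) simp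
  moreover have "aa z m = 0" if "m \<notin> range (\<lambda>n::nat. 2 * n + 2)" for m
  proof (cases "m = 0")
    case True then show ?thesis unfolding aa_def by simp
  next
    case False
    have "odd m"
    proof
      assume "even m"
      then obtain k where "m = 2 * k" by blast
      then have "m = 2 * (k - 1) + 2" using False by simp
      then show False using that by blast
    qed
    then show ?thesis unfolding aa_def dtc_def by simp
  qed
  ultimately show ?thesis using sums_mono_reindex[of "\<lambda>n. 2 * n + 2" "aa z"] by blast
qed

lemma powr_m32:
  fixes t :: real assumes "t > 0"
  shows "t powr (-3/2) = 1 / sqrt t ^ 3"
proof -
  have "sqrt t ^ 3 = (t powr (1/2)) ^ 3" using assms by (simp add: powr_half_sqrt)
  also have "\<dots> = t powr (1/2 * 3)" using assms by (simp add: powr_realpow[symmetric] powr_powr)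
  finally have "sqrt t ^ 3 = t powr (3/2)" by simp
  moreover have "t powr (-3/2) = 1 / t powr (3/2)" using assms by (simp add: powr_minus_divide)
  ultimately show ?thesis by simp
qed

lemma B_sums:
  fixes z :: real assumes z: "2 * z\<^sup>2 < 1"
  shows "bb z sums (z ^ 3 / sqrt (1 - 2 * z\<^sup>2) ^ 3)"
proof -
  let ?x = "- 2 * z\<^sup>2"
  have ax: "\<bar>?x\<bar> < 1" using z by simp
  have s0: "(\<lambda>n. ((-3/2) gchoose n) * ?x ^ n) sums (1 + ?x) powr (-3/2)" by (rule gen_binomial_real[OF ax])
  then have s1: "(\<lambda>n. z ^ 3 * (((-3/2) gchoose n) * ?x ^ n)) sums (z ^ 3 * (1 + ?x) powr (-3/2))"
    by (rule sums_mult)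
  have eq: "z ^ 3 * (((-3/2) gchoose n) * ?x ^ n) = bb z (2 * n + 3)" for n
  proof -
    have "?x ^ n = (-2) ^ n * z ^ (2 * n)"
      by (rule xpow)
    then have "z ^ 3 * (((-3/2) gchoose n) * ?x ^ n) = (((-3/2::real) gchoose n) * (-2) ^ n) * (z ^ 3 * z ^ (2 * n))"
      by simp
    also have "\<dots> = hh n * z ^ (2 * n + 3)" by (simp only: hh_gchoose power_add[symmetric] add.commute)
    also have "\<dots> = utc (2 * n + 3) / fact (2 * n + 3) * z ^ (2 * n + 3)" by (simp only: utc_coeff)
    also have "\<dots> = bb z (2 * n + 3)" unfolding bb_def by simp
    finally show ?thesis .
  qed
  have pos: "1 + ?x > 0" using z by simp
  have "(\<lambda>n. bb z (2 * n + 3)) sums (z ^ 3 / sqrt (1 - 2 * z\<^sup>2) ^ 3)"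
    using s1 unfolding eq powr_m32[OF pos] by simp
  moreover have "strict_mono (\<lambda>n::nat. 2 * n + 3)" by (rule strict_monoI) simp
  moreover have "bb z m = 0" if "m \<notin> range (\<lambda>n::nat. 2 * n + 3)" for m
  proof -
    have "\<not> (3 \<le> m \<and> odd m)"
    proof
      assume "3 \<le> m \<and> odd m"
      then obtain k where "m = 2 * k + 1" by (blast elim: oddE)
      then have "m = 2 * (k - 1) + 3" using \<open>3 \<le> m \<and> odd m\<close> by simp
      then show False using that by blast
    qed
    then show ?thesis unfolding bb_def utc_def by auto
  qed
  ultimately show ?thesis using sums_mono_reindex[of "\<lambda>n. 2 * n + 3" "bb z"] by blast
qed

lemma T1_term:
  fixes z :: real
  shows "real (T1 n) * z ^ n / fact n = (\<Sum>i\<le>n. aa z i * bb z (n - i))"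
proof (cases n)
  case 0
  then show ?thesis using T1_formula[of 0] unfolding aa_def by simp
next
  case (Suc m)
  have "real (T1 n) * z ^ n / fact n =
      (\<Sum>k\<le>m. real (Suc m) * (real (m choose k) * (dtc (Suc k) * utc (m - k))) * z ^ Suc m / fact (Suc m))"
    using T1_formula[of n] unfolding Suc by (simp add: sum_distrib_left sum_distrib_right sum_divide_distrib)
  also have "\<dots> = (\<Sum>k\<le>m. aa z (Suc k) * bb z (m - k))"
  proof (rule sum.cong[OF refl])
    fix k assume k: "k \<in> {..m}"
    then have km: "k \<le> m" by simp
    have b: "real (m choose k) = fact m / (fact k * fact (m - k))" by (rule binomial_fact[OF km])
    have zz: "z ^ Suc m = z ^ Suc k * z ^ (m - k)" using km by (simp add: power_add[symmetric])
    have fm: "fact (Suc m) = real (Suc m) * (fact m :: real)" by (simp add: fact_Suc)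
    have "real (Suc m) * (real (m choose k) * (dtc (Suc k) * utc (m - k))) * z ^ Suc m / fact (Suc m) =
        real (Suc m) * (fact m / (fact k * fact (m - k)) * (dtc (Suc k) * utc (m - k))) *
          (z ^ Suc k * z ^ (m - k)) / (real (Suc m) * fact m)"
      by (simp only: b zz fm)
    also have "\<dots> = (dtc (Suc k) * z ^ Suc k / fact k) * (utc (m - k) * z ^ (m - k) / fact (m - k))"
      by (rule aux_T) auto
    also have "\<dots> = aa z (Suc k) * bb z (m - k)" unfolding aa_def bb_def by simp
    finally show "real (Suc m) * (real (m choose k) * (dtc (Suc k) * utc (m - k))) * z ^ Suc m / fact (Suc m) =
        aa z (Suc k) * bb z (m - k)" .
  qed
  also have "\<dots> = (\<Sum>i\<le>n. aa z i * bb z (n - i))"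
    unfolding Suc sum.atMost_Suc_shift by (simp add: aa_def)
  finally show ?thesis .
qed

lemma T1_sums:
  fixes z :: real assumes z: "2 * z\<^sup>2 < 1"
  shows "(\<lambda>n. real (T1 n) * z ^ n / fact n) sums (z ^ 3 * (1 - sqrt (1 - 2 * z\<^sup>2)) / sqrt (1 - 2 * z\<^sup>2) ^ 3)"
proof -
  have z': "2 * \<bar>z\<bar>\<^sup>2 < 1" using z by simp
  have na: "norm (aa z k) = aa \<bar>z\<bar> k" for k
    unfolding aa_def using dtc_nonneg[of k] by (simp add: abs_mult power_abs)
  have nb: "norm (bb z k) = bb \<bar>z\<bar> k" for k
    unfolding bb_def using utc_nonneg[of k] by (simp add: abs_mult power_abs)
  have sa: "summable (\<lambda>k. norm (aa z k))" unfolding na using A_sums[OF z'] by (rule sums_summable)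
  have sb: "summable (\<lambda>k. norm (bb z k))" unfolding nb using B_sums[OF z'] by (rule sums_summable)
  have "(\<lambda>k. \<Sum>i\<le>k. aa z i * bb z (k - i)) sums ((\<Sum>k. aa z k) * (\<Sum>k. bb z k))"
    by (rule Cauchy_product_sums[OF sa sb])
  moreover have "(\<Sum>k. aa z k) = 1 - sqrt (1 - 2 * z\<^sup>2)" using A_sums[OF z] by (rule sums_unique[symmetric])
  moreover have "(\<Sum>k. bb z k) = z ^ 3 / sqrt (1 - 2 * z\<^sup>2) ^ 3" using B_sums[OF z] by (rule sums_unique[symmetric])
  ultimately have "(\<lambda>n. real (T1 n) * z ^ n / fact n) sums ((1 - sqrt (1 - 2 * z\<^sup>2)) * (z ^ 3 / sqrt (1 - 2 * z\<^sup>2) ^ 3))"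
    unfolding T1_term by simp
  then show ?thesis by (simp add: field_simps)
qed

theorem proposition6:
  fixes z :: real
  assumes "\<bar>z\<bar> < 1 / sqrt 2"
  shows "(\<lambda>n. real (T1 n) * z ^ n / fact n) sums
           (z ^ 3 * (1 - sqrt (1 - 2 * z\<^sup>2)) / sqrt (1 - 2 * z\<^sup>2) ^ 3)
       \<and> z ^ 3 * (1 - sqrt (1 - 2 * z\<^sup>2)) / sqrt (1 - 2 * z\<^sup>2) ^ 3
         = z * (a1_tilde (z\<^sup>2) - b1_tilde (z\<^sup>2) * sqrt (1 - 2 * z\<^sup>2)) / sqrt (1 - 2 * z\<^sup>2) ^ 3"
proof
  have "\<bar>z\<bar> ^ 2 < (1 / sqrt 2) ^ 2"
    using assms by (intro power_strict_mono) auto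
  then have z: "2 * z\<^sup>2 < 1" by (simp add: power_divide)
  show "(\<lambda>n. real (T1 n) * z ^ n / fact n) sums
           (z ^ 3 * (1 - sqrt (1 - 2 * z\<^sup>2)) / sqrt (1 - 2 * z\<^sup>2) ^ 3)"
    by (rule T1_sums[OF z])
  show "z ^ 3 * (1 - sqrt (1 - 2 * z\<^sup>2)) / sqrt (1 - 2 * z\<^sup>2) ^ 3
         = z * (a1_tilde (z\<^sup>2) - b1_tilde (z\<^sup>2) * sqrt (1 - 2 * z\<^sup>2)) / sqrt (1 - 2 * z\<^sup>2) ^ 3"
    unfolding a1_tilde_def b1_tilde_def by (simp add: algebra_simps power3_eq_cube power2_eq_square)
qed

end
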